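(* There is a constant $c>0$ such that for every integer $n\ge 1$, with $N=2^n$, the $2N\times 2N$ unitary matrix $C_N^{\mathrm{IV}}\oplus (-i)\,S_N^{\mathrm{IV}}$ can be realized exactly by a quantum circuit on $n+1$ qubits (plus at most a constant number of ancilla qubits that start and end in $|0\rangle$) consisting of at most $c\,n^2$ elementary gates. In short, $C_N^{\mathrm{IV}}$ and $S_N^{\mathrm{IV}}$ can be realized with $O(\log^2 N)$ elementary quantum gates.
   Context: Qubit/basis conventions: the state space of $m$ qubits is $\mathbb{C}^{2^m}$ with computational basis $|x\rangle$, $x$ a bit string $b_m\dots b_1$ identified with the integer $\sum_k b_k2^{k-1}$; the most significant bit corresponds to the leftmost tensor factor. Elementary gates: (i) a CNOT between any two qubits, and (ii) any single-qubit gate $I_{2^{m-t}}\otimes U\otimes I_{2^{t-1}}$ with $U\in\mathcal U(2)$ arbitrary. A circuit realizes a unitary $W$ if the product of its gates equals $W$ (ancillas, if any, mapped $|0\rangle\mapsto|0\rangle$). $A\oplus B$ is the block-diagonal matrix with blocks $A,B$. Type IV transforms: $C_N^{\mathrm{IV}}=\sqrt{2/N}\,[\cos((j+\tfrac12)(k+\tfrac12)\pi/N)]_{j,k=0,\dots,N-1}$ and $S_N^{\mathrm{IV}}=\sqrt{2/N}\,[\sin((j+\tfrac12)(k+\tfrac12)\pi/N)]_{j,k=0,\dots,N-1}$; $i=\sqrt{-1}$. *)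

theory Defs
  imports Complex_Main "Jordan_Normal_Form.Matrix"
begin

(* Kronecker (tensor) product of matrices; the left factor is the most significant *)
definition kron :: "complex mat \<Rightarrow> complex mat \<Rightarrow> complex mat" where
  "kron A B = mat (dim_row A * dim_row B) (dim_col A * dim_col B)
     (\<lambda>(i,j). A $$ (i div dim_row B, j div dim_col B) * B $$ (i mod dim_row B, j mod dim_col B))"

definition ctrans :: "complex mat \<Rightarrow> complex mat" where
  "ctrans A = mat (dim_col A) (dim_row A) (\<lambda>(i,j). cnj (A $$ (j,i)))"

definition unitary2 :: "complex mat \<Rightarrow> bool" where
  "unitary2 U \<longleftrightarrow> U \<in> carrier_mat 2 2 \<and> U * ctrans U = 1\<^sub>m 2 \<and> ctrans U * U = 1\<^sub>m 2"

(* bit number k (1-based, k = 1 least significant) of x *)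
definition qbit :: "nat \<Rightarrow> nat \<Rightarrow> nat" where
  "qbit k x = (x div 2 ^ (k - 1)) mod 2"

definition cnot_perm :: "nat \<Rightarrow> nat \<Rightarrow> nat \<Rightarrow> nat" where
  "cnot_perm c t x = (if qbit c x = 1 then
       (if qbit t x = 1 then x - 2 ^ (t - 1) else x + 2 ^ (t - 1)) else x)"

definition cnot_gate :: "nat \<Rightarrow> nat \<Rightarrow> nat \<Rightarrow> complex mat" where
  "cnot_gate m c t = mat (2 ^ m) (2 ^ m) (\<lambda>(i,j). if i = cnot_perm c t j then 1 else 0)"

definition single_gate :: "nat \<Rightarrow> nat \<Rightarrow> complex mat \<Rightarrow> complex mat" where
  "single_gate m t U = kron (kron (1\<^sub>m (2 ^ (m - t))) U) (1\<^sub>m (2 ^ (t - 1)))"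

definition elementary_gate :: "nat \<Rightarrow> complex mat \<Rightarrow> bool" where
  "elementary_gate m G \<longleftrightarrow>
     (\<exists>c t. 1 \<le> c \<and> c \<le> m \<and> 1 \<le> t \<and> t \<le> m \<and> c \<noteq> t \<and> G = cnot_gate m c t) \<or>
     (\<exists>t U. 1 \<le> t \<and> t \<le> m \<and> unitary2 U \<and> G = single_gate m t U)"

(* product of the gates of a circuit on m qubits (first gate of the list applied last) *)
definition circuit_prod :: "nat \<Rightarrow> complex mat list \<Rightarrow> complex mat" where
  "circuit_prod m gs = foldr (\<lambda>G P. G * P) gs (1\<^sub>m (2 ^ m))"

definition ket0 :: "nat \<Rightarrow> complex mat" where
  "ket0 a = mat (2 ^ a) 1 (\<lambda>(i,j). if i = 0 then 1 else 0)"

(* A circuit of elementary gates on m qubits plus a ancilla qubits (least significant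
   tensor factors), starting and ending in |0>, realizes the 2^m x 2^m matrix W *)
definition realizes :: "nat \<Rightarrow> nat \<Rightarrow> complex mat list \<Rightarrow> complex mat \<Rightarrow> bool" where
  "realizes m a gs W \<longleftrightarrow>
     (\<forall>G \<in> set gs. elementary_gate (m + a) G) \<and>
     circuit_prod (m + a) gs * kron (1\<^sub>m (2 ^ m)) (ket0 a) = kron W (ket0 a)"

definition DCT4 :: "nat \<Rightarrow> complex mat" where
  "DCT4 N = mat N N (\<lambda>(j,k). complex_of_real
     (sqrt (2 / real N) * cos ((real j + 1/2) * (real k + 1/2) * pi / real N)))"

definition DST4 :: "nat \<Rightarrow> complex mat" where
  "DST4 N = mat N N (\<lambda>(j,k). complex_of_real
     (sqrt (2 / real N) * sin ((real j + 1/2) * (real k + 1/2) * pi / real N)))"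

definition block_diag :: "complex mat \<Rightarrow> complex mat \<Rightarrow> complex mat" where
  "block_diag A B = four_block_mat A (0\<^sub>m (dim_row A) (dim_col B)) (0\<^sub>m (dim_row B) (dim_col A)) B"

end

theory Submission
  imports Defs
begin


lemma lt2pow: "(b::nat) < 2 \<Longrightarrow> r < 2^s \<Longrightarrow> b*2^s + r < 2^(Suc s)"
  by (cases "b = 0") (auto simp: less_2_cases_iff)

lemma dec_div: "b < 2 \<Longrightarrow> r < 2^s \<Longrightarrow> (X*2^(Suc s) + b*2^s + r) div 2^(Suc s) = (X::nat)"
proof -
  assume "b < 2" "r < 2^s"
  hence "b*2^s + r < 2^(Suc s)" by (rule lt2pow)
  thus ?thesis by (simp add: add.assoc del: power_Suc)
qed

lemma dec_mod: "b < 2 \<Longrightarrow> r < 2^s \<Longrightarrow> (X*2^(Suc s) + b*2^s + r) mod 2^s = (r::nat)"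
  by (simp add: mod_add_eq[symmetric] add.assoc)

lemma dec_qbit: "b < 2 \<Longrightarrow> r < 2^s \<Longrightarrow> qbit (Suc s) (X*2^(Suc s) + b*2^s + r) = (b::nat)"
proof -
  assume a: "b < 2" "r < 2^s"
  have e: "X*2^(Suc s) + b*2^s + r = (X*2+b)*2^s + r" by (simp add: algebra_simps)
  have "((X*2+b)*2^s + r) div 2^s = X*2 + b"
    using a by simp
  thus ?thesis using a unfolding qbit_def e by simp
qed

lemma dec_modS: "b < 2 \<Longrightarrow> r < 2^s \<Longrightarrow> (X*2^(Suc s) + b*2^s + r) mod 2^(Suc s) = b*2^s + (r::nat)"
proof -
  assume "b < 2" "r < 2^s"
  hence "b*2^s + r < 2^(Suc s)" by (rule lt2pow)
  thus ?thesis by (simp add: add.assoc del: power_Suc)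
qed

lemma dec: "k = (k div 2^(Suc s))*2^(Suc s) + qbit (Suc s) k * 2^s + k mod (2^s::nat)"
proof -
  have 1: "k = k div 2^s * 2^s + k mod 2^s" by (rule div_mult_mod_eq[symmetric])
  have 2: "k div 2^s = (k div 2^s div 2)*2 + (k div 2^s) mod 2" by simp
  have 3: "k div 2^s div 2 = k div 2^(Suc s)" by (simp add: div_mult2_eq power_Suc2 del: power_Suc)
  have "k = ((k div 2^(Suc s))*2 + qbit (Suc s) k) * 2^s + k mod 2^s"
    using 1 2 3 unfolding qbit_def by simp
  thus ?thesis by (simp add: algebra_simps)
qed

lemma qbit_lt: "qbit t k < 2" by (simp add: qbit_def)



lemma pow_split: "Suc s \<le> m \<Longrightarrow> 2^(m - Suc s) * 2 * 2^s = (2::nat)^m"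
proof -
  assume "Suc s \<le> m"
  then obtain k where "m = k + Suc s" by (metis le_add_diff_inverse2)
  thus ?thesis by (simp add: power_add)
qed

lemma kron_index: "i < dim_row A * dim_row B \<Longrightarrow> j < dim_col A * dim_col B \<Longrightarrow>
  kron A B $$ (i,j) = A $$ (i div dim_row B, j div dim_col B) * B $$ (i mod dim_row B, j mod dim_col B)"
  "dim_row (kron A B) = dim_row A * dim_row B" "dim_col (kron A B) = dim_col A * dim_col B"
  unfolding kron_def by auto

lemma single_gate_carrier: "Suc s \<le> m \<Longrightarrow> U \<in> carrier_mat 2 2 \<Longrightarrow>
   single_gate m (Suc s) U \<in> carrier_mat (2^m) (2^m)"
  unfolding single_gate_def carrier_mat_def using pow_split[of s m] by (simp add: kron_index)

lemma single_gate_index: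
  assumes "Suc s \<le> m" "U \<in> carrier_mat 2 2" "i < 2^m" "j < 2^m"
  shows "single_gate m (Suc s) U $$ (i,j) = (if i div 2^(Suc s) = j div 2^(Suc s) \<and> i mod 2^s = j mod 2^s
     then U $$ (qbit (Suc s) i, qbit (Suc s) j) else 0)"
proof -
  have p: "2^(m - Suc s) * 2 * 2^s = (2::nat)^m" using pow_split assms(1) by blast
  let ?A = "kron (1\<^sub>m (2 ^ (m - Suc s))) U"
  have dA: "dim_row ?A = 2^(m - Suc s) * 2" "dim_col ?A = 2^(m - Suc s) * 2"
    using assms(2) by (auto simp: kron_index)
  have "single_gate m (Suc s) U $$ (i,j) = ?A $$ (i div 2^s, j div 2^s) * 1\<^sub>m (2^s) $$ (i mod 2^s, j mod 2^s)"
    unfolding single_gate_def using assms p dA by (subst kron_index) auto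
  also have "1\<^sub>m (2^s) $$ (i mod 2^s, j mod 2^s) = (if i mod 2^s = j mod 2^s then 1 else 0)"
    by simp
  also have "?A $$ (i div 2^s, j div 2^s) = 1\<^sub>m (2 ^ (m - Suc s)) $$ (i div 2^s div 2, j div 2^s div 2)
      * U $$ (i div 2^s mod 2, j div 2^s mod 2)"
  proof (subst kron_index)
    have "i div 2^s < 2^(m - Suc s) * 2" "j div 2^s < 2^(m - Suc s) * 2"
      using assms(3,4) p by (metis less_mult_imp_div_less)+
    thus "i div 2 ^ s < dim_row (1\<^sub>m (2 ^ (m - Suc s))) * dim_row U"
         "j div 2 ^ s < dim_col (1\<^sub>m (2 ^ (m - Suc s))) * dim_col U" using assms(2) by auto
  qed (use assms(2) in auto)
  finally have e: "single_gate m (Suc s) U $$ (i, j) = 1\<^sub>m (2 ^ (m - Suc s)) $$ (i div 2^s div 2, j div 2^s div 2)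
      * U $$ (i div 2^s mod 2, j div 2^s mod 2) * (if i mod 2 ^ s = j mod 2 ^ s then 1 else 0)" .
  have d: "i div 2^s div 2 = i div 2^(Suc s)" "j div 2^s div 2 = j div 2^(Suc s)"
    by (simp_all add: div_mult2_eq power_Suc2 del: power_Suc)
  have "i div 2^(Suc s) < 2^(m - Suc s)" "j div 2^(Suc s) < 2^(m - Suc s)"
  proof -
    have q: "2^m = 2^(m - Suc s) * (2::nat)^(Suc s)" using p by simp
    show "i div 2^(Suc s) < 2^(m - Suc s)" "j div 2^(Suc s) < 2^(m - Suc s)"
      using assms(3,4) unfolding q by (simp_all add: less_mult_imp_div_less del: power_Suc)
  qed
  thus ?thesis unfolding e d qbit_def by auto
qed



definition cmono :: "nat \<Rightarrow> (nat \<Rightarrow> nat) \<Rightarrow> (nat \<Rightarrow> complex) \<Rightarrow> complex mat" where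
  "cmono n p d = mat n n (\<lambda>(i,j). if i = p j then d j else 0)"

lemma cmono_carrier[simp]: "cmono n p d \<in> carrier_mat n n"
  by (simp add: cmono_def)

lemma cmono_dim[simp]: "dim_row (cmono n p d) = n" "dim_col (cmono n p d) = n"
  by (simp_all add: cmono_def)

lemma cmono_index: "i < n \<Longrightarrow> j < n \<Longrightarrow> cmono n p d $$ (i,j) = (if i = p j then d j else 0)"
  by (simp add: cmono_def)

lemma sum_single: "(a::nat) < n \<Longrightarrow> (\<And>k. k < n \<Longrightarrow> k \<noteq> a \<Longrightarrow> f k = 0) \<Longrightarrow> (\<Sum>k\<in>{0..<n}. f k) = (f a :: complex)"
proof -
  assume a: "a < n" and z: "\<And>k. k < n \<Longrightarrow> k \<noteq> a \<Longrightarrow> f k = 0"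
  have "(\<Sum>k\<in>{0..<n}. f k) = f a + (\<Sum>k\<in>{0..<n} - {a}. f k)"
    using a by (subst sum.remove[of _ a]) auto
  also have "(\<Sum>k\<in>{0..<n} - {a}. f k) = 0" using z by (intro sum.neutral) auto
  finally show ?thesis by simp
qed

lemma sum_two: "(a::nat) < n \<Longrightarrow> b < n \<Longrightarrow> a \<noteq> b \<Longrightarrow> (\<And>k. k < n \<Longrightarrow> k \<noteq> a \<Longrightarrow> k \<noteq> b \<Longrightarrow> f k = 0)
   \<Longrightarrow> (\<Sum>k\<in>{0..<n}. f k) = (f a + f b :: complex)"
proof -
  assume a: "a < n" "b < n" "a \<noteq> b" and z: "\<And>k. k < n \<Longrightarrow> k \<noteq> a \<Longrightarrow> k \<noteq> b \<Longrightarrow> f k = 0"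
  have "(\<Sum>k\<in>{0..<n}. f k) = f a + (\<Sum>k\<in>{0..<n} - {a}. f k)"
    using a by (subst sum.remove[of _ a]) auto
  also have "(\<Sum>k\<in>{0..<n} - {a}. f k) = f b + (\<Sum>k\<in>{0..<n} - {a} - {b}. f k)"
    using a by (subst sum.remove[of _ b]) auto
  also have "(\<Sum>k\<in>{0..<n} - {a} - {b}. f k) = 0" using z by (intro sum.neutral) auto
  finally show ?thesis by simp
qed

lemma mult_entry: "A \<in> carrier_mat n1 n2 \<Longrightarrow> B \<in> carrier_mat n2 n3 \<Longrightarrow> i < n1 \<Longrightarrow> j < n3 \<Longrightarrow>
  (A * B) $$ (i,j) = (\<Sum>k\<in>{0..<n2}. A $$ (i,k) * B $$ (k,j))"
  by (simp add: scalar_prod_def)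

lemma cmono_mult: "(\<And>j. j < n \<Longrightarrow> q j < n) \<Longrightarrow>
  cmono n p d * cmono n q e = cmono n (p \<circ> q) (\<lambda>j. d (q j) * e j)"
proof (rule eq_matI)
  fix i j assume q: "\<And>j. j < n \<Longrightarrow> q j < n" and ij: "i < dim_row (cmono n (p \<circ> q) (\<lambda>j. d (q j) * e j))"
     "j < dim_col (cmono n (p \<circ> q) (\<lambda>j. d (q j) * e j))"
  hence ij: "i < n" "j < n" by auto
  have "(cmono n p d * cmono n q e) $$ (i,j) = (\<Sum>k\<in>{0..<n}. cmono n p d $$ (i,k) * cmono n q e $$ (k,j))"
    using ij by (intro mult_entry) auto
  also have "\<dots> = cmono n p d $$ (i,q j) * cmono n q e $$ (q j,j)"
    using ij q by (intro sum_single) (auto simp: cmono_index)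
  finally show "(cmono n p d * cmono n q e) $$ (i,j) = cmono n (p \<circ> q) (\<lambda>j. d (q j) * e j) $$ (i, j)"
    using ij q by (simp add: cmono_index)
qed (auto)

lemma cmono_right: "B \<in> carrier_mat r n \<Longrightarrow> i < r \<Longrightarrow> j < n \<Longrightarrow> p j < n \<Longrightarrow>
   (B * cmono n p d) $$ (i,j) = B $$ (i, p j) * d j"
proof -
  assume a: "B \<in> carrier_mat r n" "i < r" "j < n" "p j < n"
  have "(B * cmono n p d) $$ (i,j) = (\<Sum>k\<in>{0..<n}. B $$ (i,k) * cmono n p d $$ (k,j))"
    using a by (intro mult_entry) auto
  also have "\<dots> = B $$ (i, p j) * cmono n p d $$ (p j,j)"
    using a by (intro sum_single) (auto simp: cmono_index)
  finally show ?thesis using a by (simp add: cmono_index)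
qed

lemma cmono_left: "B \<in> carrier_mat n c \<Longrightarrow> i < n \<Longrightarrow> j < c \<Longrightarrow> r i < n \<Longrightarrow>
   (\<And>k. k < n \<Longrightarrow> p k = i \<longleftrightarrow> k = r i) \<Longrightarrow>
   (cmono n p d * B) $$ (i,j) = d (r i) * B $$ (r i, j)"
proof -
  assume a: "B \<in> carrier_mat n c" "i < n" "j < c" "r i < n" and pr: "\<And>k. k < n \<Longrightarrow> p k = i \<longleftrightarrow> k = r i"
  have "(cmono n p d * B) $$ (i,j) = (\<Sum>k\<in>{0..<n}. cmono n p d $$ (i,k) * B $$ (k,j))"
    using a by (intro mult_entry) auto
  also have "\<dots> = cmono n p d $$ (i,r i) * B $$ (r i,j)"
    using a pr by (intro sum_single) (auto simp: cmono_index)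
  finally show ?thesis using a pr[of "r i"] by (simp add: cmono_index)
qed

lemma diag_left: "B \<in> carrier_mat n c \<Longrightarrow> i < n \<Longrightarrow> j < c \<Longrightarrow>
   (cmono n (\<lambda>x. x) d * B) $$ (i,j) = d i * B $$ (i, j)"
  by (rule cmono_left) auto

definition bset :: "nat \<Rightarrow> nat \<Rightarrow> nat \<Rightarrow> nat" where
  "bset s b i = (i div 2^(Suc s))*2^(Suc s) + b*2^s + i mod 2^s"

lemma same_div_lt: "x div 2^(Suc s) = y div 2^(Suc s) \<Longrightarrow> (y::nat) < 2^m \<Longrightarrow> Suc s \<le> m \<Longrightarrow> x < 2^m"
proof -
  assume a: "x div 2^(Suc s) = y div 2^(Suc s)" "y < 2^m" "Suc s \<le> m"
  have q: "2^m = 2^(m - Suc s) * (2::nat)^(Suc s)" using pow_split[OF a(3)] by simp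
  have "y div 2^(Suc s) < 2^(m - Suc s)" using a(2) unfolding q by (simp add: less_mult_imp_div_less del: power_Suc)
  hence "x div 2^(Suc s) < 2^(m - Suc s)" using a(1) by simp
  thus ?thesis unfolding q by (simp add: div_less_iff_less_mult del: power_Suc)
qed

lemma bset_props: assumes "b < 2" shows
  "bset s b i div 2^(Suc s) = i div 2^(Suc s)" "bset s b i mod 2^s = i mod 2^s"
  "qbit (Suc s) (bset s b i) = b"
  using assms unfolding bset_def by (simp_all only: dec_div dec_mod dec_qbit mod_less_divisor zero_less_power zero_less_numeral)

lemma bset_lt: "b < 2 \<Longrightarrow> i < 2^m \<Longrightarrow> Suc s \<le> m \<Longrightarrow> bset s b i < 2^m"
  using same_div_lt bset_props(1) by blast

lemma bset_ne: "bset s 0 i \<noteq> bset s 1 i"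
  using bset_props(3)[of 0 s i] bset_props(3)[of 1 s i] by auto

lemma same_blocks_iff: "(k div 2^(Suc s) = i div 2^(Suc s) \<and> k mod 2^s = i mod 2^s) \<longleftrightarrow>
    (k = bset s 0 i \<or> k = bset s 1 i)"
proof
  assume a: "k div 2^(Suc s) = i div 2^(Suc s) \<and> k mod 2^s = i mod 2^s"
  have "k = bset s (qbit (Suc s) k) i" unfolding bset_def using a dec[of k s] by simp
  moreover have "qbit (Suc s) k = 0 \<or> qbit (Suc s) k = 1" using qbit_lt[of "Suc s" k] by auto
  ultimately show "k = bset s 0 i \<or> k = bset s 1 i" by auto
next
  assume "k = bset s 0 i \<or> k = bset s 1 i"
  thus "k div 2^(Suc s) = i div 2^(Suc s) \<and> k mod 2^s = i mod 2^s" using bset_props by auto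
qed

lemma single_left:
  assumes "Suc s \<le> m" "U \<in> carrier_mat 2 2" "B \<in> carrier_mat (2^m) c" "i < 2^m" "j < c"
  shows "(single_gate m (Suc s) U * B) $$ (i,j) = U $$ (qbit (Suc s) i, 0) * B $$ (bset s 0 i, j)
     + U $$ (qbit (Suc s) i, 1) * B $$ (bset s 1 i, j)"
proof -
  have "(single_gate m (Suc s) U * B) $$ (i,j) = (\<Sum>k\<in>{0..<2^m}. single_gate m (Suc s) U $$ (i,k) * B $$ (k,j))"
    using assms by (intro mult_entry[OF single_gate_carrier]) auto
  also have "\<dots> = single_gate m (Suc s) U $$ (i,bset s 0 i) * B $$ (bset s 0 i,j) +
     single_gate m (Suc s) U $$ (i,bset s 1 i) * B $$ (bset s 1 i,j)"
  proof (rule sum_two)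
    fix k assume k: "k < 2^m" "k \<noteq> bset s 0 i" "k \<noteq> bset s 1 i"
    thus "single_gate m (Suc s) U $$ (i, k) * B $$ (k, j) = 0"
      using assms same_blocks_iff[of k s i] by (auto simp: single_gate_index)
  qed (use assms bset_lt bset_ne in auto)
  also have "single_gate m (Suc s) U $$ (i,bset s 0 i) = U $$ (qbit (Suc s) i, 0)"
    using assms bset_lt[of 0 i m s] bset_props[of 0 s i] by (simp add: single_gate_index)
  also have "single_gate m (Suc s) U $$ (i,bset s 1 i) = U $$ (qbit (Suc s) i, 1)"
    using assms bset_lt[of 1 i m s] bset_props[of 1 s i] by (simp add: single_gate_index)
  finally show ?thesis .
qed

lemma single_right:
  assumes "Suc s \<le> m" "U \<in> carrier_mat 2 2" "B \<in> carrier_mat r (2^m)" "i < r" "j < 2^m"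
  shows "(B * single_gate m (Suc s) U) $$ (i,j) = B $$ (i, bset s 0 j) * U $$ (0, qbit (Suc s) j)
     + B $$ (i, bset s 1 j) * U $$ (1, qbit (Suc s) j)"
proof -
  have "(B * single_gate m (Suc s) U) $$ (i,j) = (\<Sum>k\<in>{0..<2^m}. B $$ (i,k) * single_gate m (Suc s) U $$ (k,j))"
    using assms by (intro mult_entry[OF _ single_gate_carrier]) auto
  also have "\<dots> = B $$ (i,bset s 0 j) * single_gate m (Suc s) U $$ (bset s 0 j, j) +
     B $$ (i,bset s 1 j) * single_gate m (Suc s) U $$ (bset s 1 j, j)"
  proof (rule sum_two)
    fix k assume k: "k < 2^m" "k \<noteq> bset s 0 j" "k \<noteq> bset s 1 j"
    thus "B $$ (i, k) * single_gate m (Suc s) U $$ (k, j) = 0"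
      using assms same_blocks_iff[of k s j] by (auto simp: single_gate_index)
  qed (use assms bset_lt bset_ne in auto)
  also have "single_gate m (Suc s) U $$ (bset s 0 j, j) = U $$ (0, qbit (Suc s) j)"
    using assms bset_lt[of 0 j m s] bset_props[of 0 s j] by (simp add: single_gate_index)
  also have "single_gate m (Suc s) U $$ (bset s 1 j, j) = U $$ (1, qbit (Suc s) j)"
    using assms bset_lt[of 1 j m s] bset_props[of 1 s j] by (simp add: single_gate_index)
  finally show ?thesis .
qed

definition diag2 :: "complex \<Rightarrow> complex \<Rightarrow> complex mat" where
  "diag2 a b = mat 2 2 (\<lambda>(i,j). if i = j then (if i = 0 then a else b) else 0)"

lemma diag2_carrier[simp]: "diag2 a b \<in> carrier_mat 2 2" by (simp add: diag2_def)

lemma single_diag: assumes "Suc s \<le> m"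
  shows "single_gate m (Suc s) (diag2 a b) = cmono (2^m) (\<lambda>x. x) (\<lambda>x. if qbit (Suc s) x = 1 then b else a)"
proof (rule eq_matI)
  fix i j assume "i < dim_row (cmono (2^m) (\<lambda>x. x) (\<lambda>x. if qbit (Suc s) x = 1 then b else a))"
    "j < dim_col (cmono (2^m) (\<lambda>x. x) (\<lambda>x. if qbit (Suc s) x = 1 then b else a))"
  hence ij: "i < 2^m" "j < 2^m" by auto
  have e: "i div 2^(Suc s) = j div 2^(Suc s) \<Longrightarrow> i mod 2^s = j mod 2^s \<Longrightarrow> qbit (Suc s) i = qbit (Suc s) j \<Longrightarrow> i = j"
    using dec[of i s] dec[of j s] by metis
  have q: "qbit (Suc s) i < 2" "qbit (Suc s) j < 2" by (rule qbit_lt)+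
  show "single_gate m (Suc s) (diag2 a b) $$ (i, j) = cmono (2^m) (\<lambda>x. x) (\<lambda>x. if qbit (Suc s) x = 1 then b else a) $$ (i, j)"
    using ij assms e q by (auto simp: single_gate_index cmono_index diag2_def less_2_cases_iff)
qed (use single_gate_carrier[OF assms diag2_carrier] in auto)



lemma qbit_bit: "qbit (Suc k) x = (if bit x k then 1 else 0)"
  unfolding qbit_def by (simp add: bit_iff_odd odd_iff_mod_2_eq_one)

lemma bit_mod: "bit ((x::nat) mod 2^s) k = (k < s \<and> bit x k)"
  by (metis bit_take_bit_iff take_bit_eq_mod)

lemma bit_divp: "bit ((x::nat) div 2^s) k = bit x (s + k)"
  by (metis bit_drop_bit_eq comp_apply drop_bit_eq_div)

lemma bit_dec: assumes "b < 2" "r < 2^s"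
  shows "bit (X*2^(Suc s) + b*2^s + r) k = (if k < s then bit r k else if k = s then b = 1 else bit (X::nat) (k - Suc s))"
proof -
  let ?y = "X*2^(Suc s) + b*2^s + r"
  consider "k < s" | "k = s" | "k > s" by linarith
  thus ?thesis
  proof cases
    case 1
    have "bit (?y mod 2^s) k = bit ?y k" using 1 by (simp add: bit_mod)
    thus ?thesis using 1 assms by (simp add: dec_mod del: power_Suc)
  next
    case 2
    have "qbit (Suc s) ?y = b" using assms by (rule dec_qbit)
    thus ?thesis using 2 assms by (auto simp: qbit_bit split: if_splits)
  next
    case 3
    have "bit (?y div 2^(Suc s)) (k - Suc s) = bit ?y k" using 3 by (simp add: bit_divp del: power_Suc)
    thus ?thesis using 3 assms by (simp add: dec_div del: power_Suc)
  qed
qed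

lemma bset_bit: "b < 2 \<Longrightarrow> bit (bset s b x) k = (if k = s then b = 1 else bit x k)"
proof -
  assume b: "b < 2"
  have "bit (bset s b x) k = (if k < s then bit (x mod 2^s) k else if k = s then b = 1 else bit (x div 2^(Suc s)) (k - Suc s))"
    unfolding bset_def using b by (intro bit_dec) auto
  thus ?thesis by (auto simp: bit_mod bit_divp simp del: power_Suc)
qed

lemma cnot_bset: "cnot_perm c (Suc s) x = bset s (if qbit c x = 1 then 1 - qbit (Suc s) x else qbit (Suc s) x) x"
proof -
  have d: "x = bset s (qbit (Suc s) x) x" unfolding bset_def by (rule dec)
  have q: "qbit (Suc s) x = 0 \<or> qbit (Suc s) x = 1" using qbit_lt[of "Suc s" x] by auto
  show ?thesis
  proof (cases "qbit c x = 1")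
    case True
    thus ?thesis using q
    proof (elim disjE)
      assume a: "qbit (Suc s) x = 0"
      have "x + 2^s = bset s 1 x" using d a unfolding bset_def by simp
      thus ?thesis using True a unfolding cnot_perm_def by simp
    next
      assume a: "qbit (Suc s) x = 1"
      have "x - 2^s = bset s 0 x" using d a unfolding bset_def by (metis add_diff_cancel_right' add_0 diff_add_inverse2 mult_1 mult_0 add.commute add.left_commute)
      thus ?thesis using True a unfolding cnot_perm_def by simp
    qed
  next
    case False
    thus ?thesis using d unfolding cnot_perm_def by simp
  qed
qed

lemma cnot_bit: "bit (cnot_perm (Suc c) (Suc t) x) k = (if k = t then (bit x t \<noteq> bit x c) else bit x k)"
  unfolding cnot_bset by (subst bset_bit) (auto simp: qbit_bit)

lemma cnot_lt: "x < 2^m \<Longrightarrow> Suc t \<le> m \<Longrightarrow> cnot_perm c (Suc t) x < 2^m"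
  unfolding cnot_bset by (rule bset_lt) (auto simp: qbit_def)

lemma cnot_invol: "c \<noteq> t \<Longrightarrow> cnot_perm (Suc c) (Suc t) (cnot_perm (Suc c) (Suc t) x) = x"
  by (rule bit_eqI) (auto simp: cnot_bit)

lemma cnot_cmono: "cnot_gate m c t = cmono (2^m) (cnot_perm c t) (\<lambda>_. 1)"
  unfolding cnot_gate_def cmono_def by (rule cong_mat) auto

lemma circuit_prod_simps: "circuit_prod m [] = 1\<^sub>m (2^m)" "circuit_prod m (G # gs) = G * circuit_prod m gs"
  by (simp_all add: circuit_prod_def)

lemma circuit_prod_carrier: "(\<forall>G\<in>set gs. G \<in> carrier_mat (2^m) (2^m)) \<Longrightarrow> circuit_prod m gs \<in> carrier_mat (2^m) (2^m)"
  by (induction gs) (auto simp: circuit_prod_simps)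

lemma circuit_prod_append: "(\<forall>G\<in>set xs. G \<in> carrier_mat (2^m) (2^m)) \<Longrightarrow> (\<forall>G\<in>set ys. G \<in> carrier_mat (2^m) (2^m)) \<Longrightarrow>
   circuit_prod m (xs @ ys) = circuit_prod m xs * circuit_prod m ys"
proof (induction xs)
  case Nil
  then show ?case using circuit_prod_carrier[of ys m] by (simp add: circuit_prod_simps)
next
  case (Cons a xs)
  hence c: "a \<in> carrier_mat (2^m) (2^m)" "circuit_prod m xs \<in> carrier_mat (2^m) (2^m)" "circuit_prod m ys \<in> carrier_mat (2^m) (2^m)"
    using circuit_prod_carrier[of ys m] circuit_prod_carrier[of xs m] by auto
  then show ?case using Cons by (simp add: circuit_prod_simps assoc_mult_mat[OF c])
qed



lemma cmono_cong: "(\<And>j. j < n \<Longrightarrow> p j = p' j) \<Longrightarrow> (\<And>j. j < n \<Longrightarrow> d j = d' j) \<Longrightarrow> cmono n p d = cmono n p' d'"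
  unfolding cmono_def by (rule cong_mat) auto

lemma one_cmono: "1\<^sub>m n = cmono n (\<lambda>x. x) (\<lambda>_. 1)"
  unfolding cmono_def by (rule eq_matI) auto

lemma qbit01: "qbit t x = 0 \<or> qbit t x = 1"
  using qbit_lt[of t x] by auto

definition pg :: "nat \<Rightarrow> nat \<Rightarrow> real \<Rightarrow> complex mat" where
  "pg K t \<alpha> = single_gate K t (diag2 1 (cis \<alpha>))"

lemma pg_cmono: assumes a: "Suc s \<le> K" shows "pg K (Suc s) \<alpha> = cmono (2^K) (\<lambda>x. x) (\<lambda>x. cis (\<alpha> * real (qbit (Suc s) x)))"
proof -
  have e: "\<And>j. (if qbit (Suc s) j = 1 then cis \<alpha> else 1) = cis (\<alpha> * real (qbit (Suc s) j))"
    subgoal for j using qbit01[of "Suc s" j] by auto done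
  show ?thesis unfolding pg_def single_diag[OF a] by (simp only: e)
qed

definition cpg :: "nat \<Rightarrow> nat \<Rightarrow> nat \<Rightarrow> real \<Rightarrow> complex mat list" where
  "cpg K c t \<phi> = [pg K c (\<phi>/2), pg K t (\<phi>/2), cnot_gate K c t, pg K t (-\<phi>/2), cnot_gate K c t]"

lemma cis_sum3: "cis a * cis b * cis c = cis (a + b + c)"
  by (simp add: cis_mult)

lemma cpg_prod:
  assumes "Suc c \<le> K" "Suc t \<le> K" "c \<noteq> t"
  shows "circuit_prod K (cpg K (Suc c) (Suc t) \<phi>) =
     cmono (2^K) (\<lambda>x. x) (\<lambda>x. cis (\<phi> * real (qbit (Suc c) x) * real (qbit (Suc t) x)))"
proof -
  have lt: "\<And>x. x < 2^K \<Longrightarrow> cnot_perm (Suc c) (Suc t) x < 2^K" using assms cnot_lt by blast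
  have qc: "qbit (Suc c) (cnot_perm (Suc c) (Suc t) x) = qbit (Suc c) x" for x
    using assms(3) by (simp add: qbit_bit cnot_bit)
  have qt: "qbit (Suc t) (cnot_perm (Suc c) (Suc t) x) = (if qbit (Suc c) x = 1 then 1 - qbit (Suc t) x else qbit (Suc t) x)" for x
    by (simp add: qbit_bit cnot_bit)
  show ?thesis
    unfolding cpg_def circuit_prod_simps one_cmono cnot_cmono
    using assms
    apply (simp add: pg_cmono cmono_mult lt)
    apply (rule cmono_cong)
     apply (simp add: cnot_invol assms(3))
    apply (simp add: qc qt)
    subgoal for j
      using qbit01[of "Suc c" j] qbit01[of "Suc t" j]
      by (elim disjE) (simp_all add: cis_mult algebra_simps)
    done
qed



lemma mod_suc: "(x::nat) mod 2^(Suc k) = qbit (Suc k) x * 2^k + x mod 2^k"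
proof -
  have "x mod 2^(Suc k) = (x div 2^(Suc k)*2^(Suc k) + qbit (Suc k) x * 2^k + x mod 2^k) mod 2^(Suc k)"
    using dec[of x k] by simp
  also have "\<dots> = qbit (Suc k) x * 2^k + x mod 2^k" by (rule dec_modS) (simp_all add: qbit_lt)
  finally show ?thesis .
qed

lemma cnot_carrier[simp]: "cnot_gate K c t \<in> carrier_mat (2^K) (2^K)"
  by (simp add: cnot_cmono)

lemma pg_carrier: "Suc s \<le> K \<Longrightarrow> pg K (Suc s) \<alpha> \<in> carrier_mat (2^K) (2^K)"
  by (simp add: pg_cmono)

lemma cpg_carrier: "Suc c \<le> K \<Longrightarrow> Suc t \<le> K \<Longrightarrow> \<forall>G\<in>set (cpg K (Suc c) (Suc t) \<phi>). G \<in> carrier_mat (2^K) (2^K)"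
  by (simp add: cpg_def pg_carrier)

fun cpc :: "nat \<Rightarrow> nat \<Rightarrow> real \<Rightarrow> nat \<Rightarrow> complex mat list" where
  "cpc K c \<phi> 0 = []"
| "cpc K c \<phi> (Suc k) = cpg K c (Suc k) (\<phi> * 2^k) @ cpc K c \<phi> k"

lemma cpc_carrier: "Suc c \<le> K \<Longrightarrow> k \<le> c \<Longrightarrow> \<forall>G\<in>set (cpc K (Suc c) \<phi> k). G \<in> carrier_mat (2^K) (2^K)"
proof (induction k)
  case (Suc k)
  thus ?case using cpg_carrier[of c K k "\<phi> * 2^k"] by auto
qed simp

lemma cpc_prod: "Suc c \<le> K \<Longrightarrow> k \<le> c \<Longrightarrow> circuit_prod K (cpc K (Suc c) \<phi> k) =
   cmono (2^K) (\<lambda>x. x) (\<lambda>x. cis (\<phi> * real (qbit (Suc c) x) * real (x mod 2^k)))"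
proof (induction k)
  case 0
  then show ?case by (simp add: circuit_prod_simps one_cmono)
next
  case (Suc k)
  have "circuit_prod K (cpc K (Suc c) \<phi> (Suc k)) = circuit_prod K (cpg K (Suc c) (Suc k) (\<phi> * 2^k)) * circuit_prod K (cpc K (Suc c) \<phi> k)"
    using Suc.prems by (simp only: cpc.simps, intro circuit_prod_append cpg_carrier cpc_carrier) auto
  also have "\<dots> = cmono (2^K) (\<lambda>x. x) (\<lambda>x. cis (\<phi> * 2^k * real (qbit (Suc c) x) * real (qbit (Suc k) x))) *
     cmono (2^K) (\<lambda>x. x) (\<lambda>x. cis (\<phi> * real (qbit (Suc c) x) * real (x mod 2^k)))"
    using Suc by (subst cpg_prod) auto
  also have "\<dots> = cmono (2^K) (\<lambda>x. x) (\<lambda>x. cis (\<phi> * real (qbit (Suc c) x) * real (x mod 2^(Suc k))))"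
    by (subst cmono_mult) (auto intro!: cmono_cong simp: cis_mult mod_suc algebra_simps simp del: power_Suc)
  finally show ?case .
qed

fun dch :: "nat \<Rightarrow> real \<Rightarrow> nat \<Rightarrow> complex mat list" where
  "dch K \<alpha> 0 = []"
| "dch K \<alpha> (Suc k) = pg K (Suc k) (\<alpha> * 2^k) # dch K \<alpha> k"

lemma dch_carrier: "k \<le> K \<Longrightarrow> \<forall>G\<in>set (dch K \<alpha> k). G \<in> carrier_mat (2^K) (2^K)"
  by (induction k) (auto simp: pg_carrier)

lemma dch_prod: "k \<le> K \<Longrightarrow> circuit_prod K (dch K \<alpha> k) =
   cmono (2^K) (\<lambda>x. x) (\<lambda>x. cis (\<alpha> * real (x mod 2^k)))"
proof (induction k)
  case 0
  then show ?case by (simp add: circuit_prod_simps one_cmono)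
next
  case (Suc k)
  have "circuit_prod K (dch K \<alpha> (Suc k)) = pg K (Suc k) (\<alpha> * 2^k) * circuit_prod K (dch K \<alpha> k)"
    by (simp add: circuit_prod_simps)
  also have "\<dots> = cmono (2^K) (\<lambda>x. x) (\<lambda>x. cis (\<alpha> * 2^k * real (qbit (Suc k) x))) *
     cmono (2^K) (\<lambda>x. x) (\<lambda>x. cis (\<alpha> * real (x mod 2^k)))"
    using Suc by (simp add: pg_cmono)
  also have "\<dots> = cmono (2^K) (\<lambda>x. x) (\<lambda>x. cis (\<alpha> * real (x mod 2^(Suc k))))"
    by (subst cmono_mult) (auto intro!: cmono_cong simp: cis_mult mod_suc algebra_simps simp del: power_Suc)
  finally show ?case .
qed

definition swapc :: "nat \<Rightarrow> nat \<Rightarrow> nat \<Rightarrow> complex mat list" where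
  "swapc K a b = [cnot_gate K a b, cnot_gate K b a, cnot_gate K a b]"

fun rotc :: "nat \<Rightarrow> nat \<Rightarrow> complex mat list" where
  "rotc K 0 = []"
| "rotc K (Suc 0) = []"
| "rotc K (Suc (Suc s)) = swapc K (Suc s) (Suc (Suc s)) @ rotc K (Suc s)"

definition rotp :: "nat \<Rightarrow> nat \<Rightarrow> nat" where
  "rotp s j = (j div 2^(Suc s))*2^(Suc s) + (j mod 2)*2^s + (j mod 2^(Suc s)) div 2"

lemma rotp_r: "(j mod 2^(Suc s)) div 2 < (2::nat)^s"
  by (metis less_mult_imp_div_less mod_less_divisor pos2 power_Suc2 zero_less_power)

lemma rotp_div: "rotp s j div 2^(Suc s) = j div 2^(Suc s)"
  unfolding rotp_def by (rule dec_div) (simp_all add: rotp_r del: power_Suc)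

lemma rotp_lt: "j < 2^K \<Longrightarrow> Suc s \<le> K \<Longrightarrow> rotp s j < 2^K"
  using same_div_lt rotp_div by metis

lemma rotp_bit: "bit (rotp s j) k = (if k < s then bit j (Suc k) else if k = s then bit j 0 else bit j k)"
proof -
  have c: "bit (rotp s j) k = (if k < s then bit ((j mod 2^(Suc s)) div 2) k else if k = s then j mod 2 = 1
     else bit (j div 2^(Suc s)) (k - Suc s))"
    unfolding rotp_def by (rule bit_dec) (simp_all add: rotp_r del: power_Suc)
  have h: "(j mod 2 = 1) = bit j 0" by (simp add: bit_0 odd_iff_mod_2_eq_one)
  have h1: "bit ((j mod 2^(Suc s)) div 2) k = bit (j mod 2^(Suc s)) (Suc k)"
    using bit_divp[of "j mod 2^(Suc s)" 1 k] by simp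
  have h2: "k < s \<Longrightarrow> bit (j mod 2^(Suc s)) (Suc k) = bit j (Suc k)" by (simp add: bit_mod del: power_Suc)
  have h3: "\<not> k < s \<Longrightarrow> k \<noteq> s \<Longrightarrow> bit (j div 2^(Suc s)) (k - Suc s) = bit j k"
    using bit_divp[of j "Suc s" "k - Suc s"] by (simp del: power_Suc)
  show ?thesis unfolding c using h h1 h2 h3 by (simp del: power_Suc)
qed

lemma swapc_carrier: "\<forall>G\<in>set (swapc K a b). G \<in> carrier_mat (2^K) (2^K)"
  by (simp add: swapc_def)

lemma rotc_carrier: "\<forall>G\<in>set (rotc K s). G \<in> carrier_mat (2^K) (2^K)"
  by (induction K s rule: rotc.induct) (auto simp: swapc_def)

lemma rotc_prod: "Suc s \<le> K \<Longrightarrow> circuit_prod K (rotc K (Suc s)) = cmono (2^K) (rotp s) (\<lambda>_. 1)"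
proof (induction s)
  case 0
  have "rotp 0 j = j" for j unfolding rotp_def by simp
  then show ?case by (simp add: circuit_prod_simps one_cmono)
next
  case (Suc s)
  have lt: "\<And>j. j < 2^K \<Longrightarrow> cnot_perm c (Suc t) j < 2^K" if "Suc t \<le> K" for c t using that cnot_lt by blast
  have "circuit_prod K (rotc K (Suc (Suc s))) = circuit_prod K (swapc K (Suc s) (Suc (Suc s))) * circuit_prod K (rotc K (Suc s))"
    by (simp add: circuit_prod_append swapc_carrier rotc_carrier)
  also have "\<dots> = cmono (2^K) (cnot_perm (Suc s) (Suc (Suc s)) \<circ> cnot_perm (Suc (Suc s)) (Suc s) \<circ> cnot_perm (Suc s) (Suc (Suc s)))
       (\<lambda>_. 1) * cmono (2^K) (rotp s) (\<lambda>_. 1)"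
    using Suc by (simp add: swapc_def circuit_prod_simps one_cmono cnot_cmono cmono_mult lt comp_def)
  also have "\<dots> = cmono (2^K) (rotp (Suc s)) (\<lambda>_. 1)"
    using Suc.prems
  proof (subst cmono_mult)
    show "cmono (2 ^ K) ((cnot_perm (Suc s) (Suc (Suc s)) \<circ> cnot_perm (Suc (Suc s)) (Suc s) \<circ> cnot_perm (Suc s) (Suc (Suc s))) \<circ> rotp s)
       (\<lambda>j. 1 * 1) = cmono (2 ^ K) (rotp (Suc s)) (\<lambda>_. 1)"
    proof (rule cmono_cong)
      fix j
      show "((cnot_perm (Suc s) (Suc (Suc s)) \<circ> cnot_perm (Suc (Suc s)) (Suc s) \<circ> cnot_perm (Suc s) (Suc (Suc s))) \<circ> rotp s) j = rotp (Suc s) j"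
        by (rule bit_eqI) (auto simp: cnot_bit rotp_bit)
    qed simp
  qed (use Suc.prems rotp_lt in auto)
  finally show ?case .
qed



definition hh :: complex where "hh = 1 / complex_of_real (sqrt 2)"

definition Hm :: "complex mat" where
  "Hm = mat 2 2 (\<lambda>(i,j). if i = 1 \<and> j = 1 then - hh else hh)"

lemma Hm_carrier[simp]: "Hm \<in> carrier_mat 2 2" by (simp add: Hm_def)

lemma Hm_index: "b < 2 \<Longrightarrow> c < 2 \<Longrightarrow> Hm $$ (b,c) = cis (- pi * real b * real c) * hh"
proof -
  have "cis (- pi) = -1" by (simp add: complex_eq_iff)
  thus "b < 2 \<Longrightarrow> c < 2 \<Longrightarrow> Hm $$ (b,c) = cis (- pi * real b * real c) * hh"
    by (auto simp: Hm_def less_2_cases_iff)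
qed

definition fe :: "nat \<Rightarrow> nat \<Rightarrow> nat \<Rightarrow> complex" where
  "fe m x y = cis (-2 * pi * real x * real y / 2^m) / complex_of_real (sqrt (2^m))"

lemma cis_minus_2pi_nat: "cis (a - 2 * pi * real n) = cis a"
proof -
  have "cis (a - 2 * pi * real n) = cis a / cis (2 * pi * real n)" by (rule cis_divide[symmetric])
  also have "cis (2 * pi * real n) = 1" by (rule cis_multiple_2pi) simp
  finally show ?thesis by simp
qed

lemma fe_step:
  assumes "b < 2" "y0 < 2"
  shows "fe (Suc m) (b*2^m + x) (2*y' + y0) = Hm $$ (b,y0) * cis (-2*pi/2^(Suc m) * real y0 * real x) * fe m x y'"
proof -
  have e: "-2 * pi * real (b*2^m + x) * real (2*y' + y0) / 2^(Suc m) =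
     (- pi * real b * real y0 + (-2*pi/2^(Suc m) * real y0 * real x) + (-2 * pi * real x * real y' / 2^m)) - 2 * pi * real (b * y')"
    by (simp add: field_simps)
  have s: "complex_of_real (sqrt (2^(Suc m))) = complex_of_real (sqrt 2) * complex_of_real (sqrt (2^m))"
    by (simp add: real_sqrt_mult)
  show ?thesis
    unfolding fe_def e cis_minus_2pi_nat Hm_index[OF assms] s hh_def
    by (simp add: cis_mult)
qed

lemma cmono_right_mat: "A \<in> carrier_mat r n \<Longrightarrow> (\<And>j. j < n \<Longrightarrow> p j < n) \<Longrightarrow>
  A * cmono n p d = mat r n (\<lambda>(i,j). A $$ (i, p j) * d j)"
  apply (rule eq_matI)
  subgoal for i j using cmono_right[of A r n i j p d] by simp
  by auto

lemma diag_left_mat: "B \<in> carrier_mat n c \<Longrightarrow> cmono n (\<lambda>x. x) d * B = mat n c (\<lambda>(i,j). d i * B $$ (i,j))"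
  apply (rule eq_matI)
  subgoal for i j using diag_left[of B n c i j d] by simp
  by auto

lemma single_left_mat: "Suc s \<le> m \<Longrightarrow> U \<in> carrier_mat 2 2 \<Longrightarrow> B \<in> carrier_mat (2^m) c \<Longrightarrow>
  single_gate m (Suc s) U * B = mat (2^m) c (\<lambda>(i,j). U $$ (qbit (Suc s) i, 0) * B $$ (bset s 0 i, j)
     + U $$ (qbit (Suc s) i, 1) * B $$ (bset s 1 i, j))"
  apply (rule eq_matI)
  subgoal for i j using single_left[of s m U B c i j] by simp
  using single_gate_carrier[of s m U] by auto

lemma single_right_mat: "Suc s \<le> m \<Longrightarrow> U \<in> carrier_mat 2 2 \<Longrightarrow> B \<in> carrier_mat r (2^m) \<Longrightarrow>
  B * single_gate m (Suc s) U = mat r (2^m) (\<lambda>(i,j). B $$ (i, bset s 0 j) * U $$ (0, qbit (Suc s) j)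
     + B $$ (i, bset s 1 j) * U $$ (1, qbit (Suc s) j))"
  apply (rule eq_matI)
  subgoal for i j using single_right[of s m U B r i j] by simp
  using single_gate_carrier[of s m U] by auto

definition EF :: "nat \<Rightarrow> nat \<Rightarrow> complex mat" where
  "EF K m = mat (2^K) (2^K) (\<lambda>(i,j). if i div 2^m = j div 2^m then fe m (i mod 2^m) (j mod 2^m) else 0)"

lemma EF_carrier[simp]: "EF K m \<in> carrier_mat (2^K) (2^K)" by (simp add: EF_def)

fun qftc :: "nat \<Rightarrow> nat \<Rightarrow> complex mat list" where
  "qftc K 0 = []"
| "qftc K (Suc m) = [single_gate K (Suc m) Hm] @ cpc K (Suc m) (-2*pi/2^(Suc m)) m @ qftc K m @ rotc K (Suc m)"

lemma qftc_carrier: "m \<le> K \<Longrightarrow> \<forall>G\<in>set (qftc K m). G \<in> carrier_mat (2^K) (2^K)"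
proof (induction m)
  case (Suc m)
  thus ?case using cpc_carrier[of m K m] rotc_carrier[of K "Suc m"] single_gate_carrier[of m K Hm] by auto
qed simp

lemma EF0: "EF K 0 = 1\<^sub>m (2^K)"
  by (rule eq_matI) (auto simp: EF_def fe_def)

lemma qft_entry:
  assumes "Suc m \<le> K" "i < 2^K" "j < 2^K"
  shows "EF K (Suc m) $$ (i,j) =
    Hm $$ (qbit (Suc m) i, 0) * (cis (-2*pi/2^(Suc m) * real (qbit (Suc m) (bset m 0 i)) * real (bset m 0 i mod 2^m))
       * EF K m $$ (bset m 0 i, rotp m j)) +
    Hm $$ (qbit (Suc m) i, 1) * (cis (-2*pi/2^(Suc m) * real (qbit (Suc m) (bset m 1 i)) * real (bset m 1 i mod 2^m))
       * EF K m $$ (bset m 1 i, rotp m j))"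
proof -
  define I where "I = i div 2^(Suc m)"
  define b where "b = qbit (Suc m) i"
  define x where "x = i mod 2^m"
  define J where "J = j div 2^(Suc m)"
  define y0 where "y0 = j mod 2"
  define y' where "y' = (j mod 2^(Suc m)) div 2"
  have b2: "b < 2" unfolding b_def by (rule qbit_lt)
  have y02: "y0 < 2" unfolding y0_def by simp
  have x: "x < 2^m" unfolding x_def by simp
  have y': "y' < 2^m" unfolding y'_def by (rule rotp_r)
  have imod: "i mod 2^(Suc m) = b*2^m + x" unfolding b_def x_def by (rule mod_suc)
  have jmod: "j mod 2^(Suc m) = 2*y' + y0" unfolding y'_def y0_def
    by (metis add.commute div_mult_mod_eq mod_mod_cancel dvd_power pos2 zero_less_Suc mult.commute
        le_add1 power_one_right dvd_power_le plus_1_eq_Suc)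
  have bs: "bset m c i div 2^m = I*2 + c" "bset m c i mod 2^m = x" "qbit (Suc m) (bset m c i) = c" if "c < 2" for c
  proof -
    have "bset m c i = (I*2 + c)*2^m + x" unfolding bset_def I_def x_def by (simp add: algebra_simps)
    thus "bset m c i div 2^m = I*2 + c" "bset m c i mod 2^m = x" using x by simp_all
    show "qbit (Suc m) (bset m c i) = c" using bset_props that by blast
  qed
  have rp: "rotp m j div 2^m = J*2 + y0" "rotp m j mod 2^m = y'"
  proof -
    have "rotp m j = (J*2 + y0)*2^m + y'" unfolding rotp_def J_def y0_def y'_def by (simp add: algebra_simps)
    thus "rotp m j div 2^m = J*2 + y0" "rotp m j mod 2^m = y'" using y' by simp_all
  qed
  have lt: "bset m c i < 2^K" if "c < 2" for c using bset_lt assms that by blast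
  have rlt: "rotp m j < 2^K" using rotp_lt assms by blast
  have ef: "EF K m $$ (bset m c i, rotp m j) = (if I = J \<and> c = y0 then fe m x y' else 0)" if "c < 2" for c
  proof -
    have h: "(I*2 + c = J*2 + y0) = (I = J \<and> c = y0)" using that y02 by presburger
    have "EF K m $$ (bset m c i, rotp m j) = (if bset m c i div 2^m = rotp m j div 2^m then
       fe m (bset m c i mod 2^m) (rotp m j mod 2^m) else 0)"
      unfolding EF_def using lt[OF that] rlt by simp
    thus ?thesis unfolding bs[OF that] rp h .
  qed
  have lhs: "EF K (Suc m) $$ (i,j) = (if I = J then fe (Suc m) (b*2^m + x) (2*y' + y0) else 0)"
    using assms imod jmod unfolding EF_def I_def J_def by simp
  have e0: "EF K m $$ (bset m 0 i, rotp m j) = (if I = J \<and> 0 = y0 then fe m x y' else 0)" by (rule ef) simp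
  have e1: "EF K m $$ (bset m 1 i, rotp m j) = (if I = J \<and> 1 = y0 then fe m x y' else 0)" by (rule ef) simp
  have b0: "bset m 0 i mod 2^m = x" "qbit (Suc m) (bset m 0 i) = 0" using bs[of 0] by simp_all
  have b1: "bset m 1 i mod 2^m = x" "qbit (Suc m) (bset m 1 i) = 1" using bs[of 1] by simp_all
  have fs: "fe (Suc m) (b*2^m + x) (2*y' + y0) = Hm $$ (b,y0) * cis (-2*pi/2^(Suc m) * real y0 * real x) * fe m x y'"
    by (rule fe_step[OF b2 y02])
  show ?thesis
    unfolding lhs b_def[symmetric] e0 e1 b0 b1 fs
    using y02 by (cases "y0 = 0") (auto simp: less_2_cases_iff)
qed



lemma qft_prod: "m \<le> K \<Longrightarrow> circuit_prod K (qftc K m) = EF K m"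
proof (induction m)
  case 0
  then show ?case by (simp add: circuit_prod_simps EF0)
next
  case (Suc m)
  have m: "m \<le> K" "Suc m \<le> K" using Suc.prems by auto
  have c1: "\<forall>G\<in>set (cpc K (Suc m) (-2*pi/2^(Suc m)) m). G \<in> carrier_mat (2^K) (2^K)" using cpc_carrier m by blast
  have c2: "\<forall>G\<in>set (qftc K m). G \<in> carrier_mat (2^K) (2^K)" using qftc_carrier m by blast
  have c3: "\<forall>G\<in>set (rotc K (Suc m)). G \<in> carrier_mat (2^K) (2^K)" using rotc_carrier by blast
  have "circuit_prod K (qftc K (Suc m)) = single_gate K (Suc m) Hm * (circuit_prod K (cpc K (Suc m) (-2*pi/2^(Suc m)) m) *
     (circuit_prod K (qftc K m) * circuit_prod K (rotc K (Suc m))))"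
  proof -
    have "circuit_prod K (qftc K m @ rotc K (Suc m)) = circuit_prod K (qftc K m) * circuit_prod K (rotc K (Suc m))"
      using c2 c3 by (rule circuit_prod_append)
    moreover have "circuit_prod K (cpc K (Suc m) (-2*pi/2^(Suc m)) m @ (qftc K m @ rotc K (Suc m))) =
      circuit_prod K (cpc K (Suc m) (-2*pi/2^(Suc m)) m) * circuit_prod K (qftc K m @ rotc K (Suc m))"
      using c1 c2 c3 by (intro circuit_prod_append) auto
    ultimately show ?thesis by (simp only: qftc.simps append.simps circuit_prod_simps)
  qed
  also have "\<dots> = single_gate K (Suc m) Hm * (cmono (2^K) (\<lambda>x. x) (\<lambda>x. cis (-2*pi/2^(Suc m) * real (qbit (Suc m) x) * real (x mod 2^m))) *
     (EF K m * cmono (2^K) (rotp m) (\<lambda>_. 1)))"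
    using Suc m by (simp add: cpc_prod rotc_prod)
  also have "\<dots> = EF K (Suc m)"
  proof -
    have r: "EF K m * cmono (2^K) (rotp m) (\<lambda>_. 1) = mat (2^K) (2^K) (\<lambda>(i,j). EF K m $$ (i, rotp m j) * 1)"
      by (rule cmono_right_mat[OF EF_carrier]) (rule rotp_lt[OF _ m(2)])
    show ?thesis unfolding r
    apply (subst diag_left_mat[where c="2^K"], simp)
    apply (subst single_left_mat[OF m(2) Hm_carrier, where c="2^K"], simp)
    apply (rule eq_matI)
    subgoal for i j
      using m(2) carrier_matD[OF EF_carrier[of K "Suc m"]] bset_lt[of 0 i K m] bset_lt[of 1 i K m] rotp_lt[of j K m]
      by (simp add: qft_entry)
    by (simp_all add: EF_def)
  qed
  finally show ?case .
qed



fun fanc :: "nat \<Rightarrow> nat \<Rightarrow> nat \<Rightarrow> complex mat list" where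
  "fanc K c 0 = []"
| "fanc K c (Suc k) = cnot_gate K c (Suc k) # fanc K c k"

fun fanp :: "nat \<Rightarrow> nat \<Rightarrow> nat \<Rightarrow> nat" where
  "fanp c 0 x = x"
| "fanp c (Suc k) x = cnot_perm c (Suc k) (fanp c k x)"

lemma fanc_carrier: "\<forall>G\<in>set (fanc K c k). G \<in> carrier_mat (2^K) (2^K)"
  by (induction k) auto

lemma fanp_lt: "x < 2^K \<Longrightarrow> k \<le> K \<Longrightarrow> fanp c k x < 2^K"
  by (induction k) (auto intro: cnot_lt)

lemma fanc_prod: "k \<le> K \<Longrightarrow> circuit_prod K (fanc K c k) = cmono (2^K) (fanp c k) (\<lambda>_. 1)"
proof (induction k)
  case 0
  then show ?case by (simp add: circuit_prod_simps one_cmono)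
next
  case (Suc k)
  hence "circuit_prod K (fanc K c (Suc k)) = cmono (2^K) (cnot_perm c (Suc k)) (\<lambda>_. 1) * cmono (2^K) (fanp c k) (\<lambda>_. 1)"
    by (simp add: circuit_prod_simps cnot_cmono)
  also have "\<dots> = cmono (2^K) (fanp c (Suc k)) (\<lambda>_. 1)"
    using Suc.prems by (subst cmono_mult) (auto intro!: cmono_cong fanp_lt)
  finally show ?case .
qed

lemma fanp_bit: "k \<le> n \<Longrightarrow> bit (fanp (Suc n) k x) j = (if j < k then bit x j \<noteq> bit x n else bit x j)"
proof (induction k arbitrary: j)
  case (Suc k)
  have "bit (fanp (Suc n) k x) n = bit x n" using Suc.IH[of n] Suc.prems by auto
  then show ?case using Suc by (auto simp: cnot_bit)
qed simp

lemma bit_big: "(x::nat) < 2^n \<Longrightarrow> n \<le> j \<Longrightarrow> \<not> bit x j"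
  by (metis bit_take_bit_iff not_less take_bit_nat_eq_self_iff)

lemma bit_compl: "(r::nat) < 2^n \<Longrightarrow> bit (2^n - 1 - r) j = (j < n \<and> \<not> bit r j)"
proof (induction n arbitrary: r j)
  case 0
  then show ?case by simp
next
  case (Suc n)
  define r2 where "r2 = r div 2"
  define r0 where "r0 = r mod 2"
  have r2: "r2 < 2^n" using Suc.prems unfolding r2_def by (simp add: less_mult_imp_div_less mult.commute)
  have r0: "r0 < 2" unfolding r0_def by simp
  have r: "r = 2*r2 + r0" unfolding r2_def r0_def by simp
  have e: "2^(Suc n) - 1 - r = 2*(2^n - 1 - r2) + (1 - r0)"
    using r r2 r0 by (simp add: algebra_simps)
  show ?case
  proof (cases j)
    case 0
    then show ?thesis unfolding e using r0 r by (auto simp: bit_0 less_2_cases_iff)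
  next
    case (Suc j')
    have d: "(2*(2^n - 1 - r2) + (1 - r0)) div 2 = 2^n - 1 - r2" using r0 by auto
    have "bit (2*(2^n - 1 - r2) + (1 - r0)) (Suc j') = bit ((2*(2^n - 1 - r2) + (1 - r0)) div 2) j'"
      by (rule bit_Suc)
    hence "bit (2*(2^n - 1 - r2) + (1 - r0)) (Suc j') = bit (2^n - 1 - r2) j'" unfolding d .
    moreover have "bit r (Suc j') = bit r2 j'" unfolding r2_def by (simp add: bit_Suc)
    ultimately show ?thesis unfolding e Suc using Suc.IH[OF r2] by simp
  qed
qed



lemma fanp_id: "x < 2^n \<Longrightarrow> fanp (Suc n) n x = x"
  by (rule bit_eqI) (auto simp: fanp_bit bit_big)

lemma bit_top: "(r::nat) < 2^n \<Longrightarrow> bit (2^n + r) j = (if j < n then bit r j else j = n)"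
proof -
  assume r: "r < 2^n"
  have "bit ((0::nat)*2^(Suc n) + 1*2^n + r) j = (if j < n then bit r j else if j = n then 1 = (1::nat) else bit (0::nat) (j - Suc n))"
    by (rule bit_dec) (use r in auto)
  thus ?thesis by auto
qed

lemma fanp_hi: "r < 2^n \<Longrightarrow> fanp (Suc n) n (2^n + r) = 2^(Suc n) - 1 - r"
proof (rule bit_eqI)
  fix j assume r: "r < 2^n"
  have r': "r < 2^(Suc n)" using r by simp
  show "bit (fanp (Suc n) n (2^n + r)) j = bit (2^(Suc n) - 1 - r) j"
    unfolding bit_compl[OF r'] using r bit_big[OF r, of n] by (auto simp: fanp_bit bit_top)
qed

lemma fanp_invol: "fanp (Suc n) n (fanp (Suc n) n x) = x"
  by (rule bit_eqI) (auto simp: fanp_bit)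

lemma cis_odd: "cis (- pi * real (2*b + 1)) = -1"
proof -
  have "- pi * real (2*b + 1) = - pi - 2 * pi * real b" by (simp add: algebra_simps)
  moreover have "cis (- pi) = -1" by (simp add: complex_eq_iff)
  ultimately show ?thesis using cis_minus_2pi_nat[of "-pi" b] by simp
qed

lemma G_val:
  "cis (- pi / 2^(Suc K)) * cis (- pi / 2^K * real x) * fe K x y * cis (- pi / 2^K * real y) =
   cis (- pi * real (2*x+1) * real (2*y+1) / 2^(Suc K)) / complex_of_real (sqrt (2^K))"
proof -
  have h: "- pi * real (2*x+1) * real (2*y+1) / 2^(Suc K) = - pi / 2^(Suc K) + - pi / 2^K * real x + -2 * pi * real x * real y / 2^K + - pi / 2^K * real y"
    by (simp add: field_simps)
  show ?thesis unfolding fe_def h cis_mult[symmetric] by simp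
qed

lemma flip1: "a < 2*N \<Longrightarrow> cis (- pi * real (2*(2*N - 1 - a)+1) * real (2*b+1) / (4*N)) =
   - cis (pi * real (2*a+1) * real (2*b+1) / (4*N))"
proof -
  assume a: "a < 2*N"
  hence N: "N > 0" by simp
  have "real (2*(2*N - 1 - a)+1) = 4 * real N - real (2*a+1)" using a by (simp add: of_nat_diff)
  hence e: "- pi * real (2*(2*N - 1 - a)+1) * real (2*b+1) / (4*N) =
      pi * real (2*a+1) * real (2*b+1) / (4*N) + - pi * real (2*b+1)"
    using N by (simp add: field_simps)
  show ?thesis unfolding e cis_mult[symmetric] cis_odd by simp
qed

lemma flip2: "a < 2*N \<Longrightarrow> b < 2*N \<Longrightarrow> cis (- pi * real (2*(2*N - 1 - a)+1) * real (2*(2*N - 1 - b)+1) / (4*N)) =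
   cis (- pi * real (2*a+1) * real (2*b+1) / (4*N))"
proof -
  assume a: "a < 2*N" and b: "b < 2*N"
  hence N: "N > 0" by simp
  have "real (2*(2*N - 1 - a)+1) = 4 * real N - real (2*a+1)" using a by (simp add: of_nat_diff)
  moreover have "real (2*(2*N - 1 - b)+1) = 4 * real N - real (2*b+1)" using b by (simp add: of_nat_diff)
  ultimately have "- pi * real (2*(2*N - 1 - a)+1) * real (2*(2*N - 1 - b)+1) / (4*N) =
      (- pi * real (2*a+1) * real (2*b+1) / (4*N) + 2 * pi * real (a + b + 1)) - 2 * pi * real (2*N)"
    using N a b by (simp add: field_simps)
  hence e: "- pi * real (2*(2*N - 1 - a)+1) * real (2*(2*N - 1 - b)+1) / (4*N) =
      (- pi * real (2*a+1) * real (2*b+1) / (4*N) + 2 * pi * real (a + b + 1)) - 2 * pi * real (2*N)" .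
  have p: "cis (z + 2 * pi * real k) = cis z" for z k
  proof -
    have "cis (z + 2 * pi * real k) = cis z * cis (2 * pi * real k)" by (rule cis_mult[symmetric])
    also have "cis (2 * pi * real k) = 1" by (rule cis_multiple_2pi) simp
    finally show ?thesis by simp
  qed
  show ?thesis unfolding e cis_minus_2pi_nat p ..
qed



definition Zm :: "complex mat" where "Zm = diag2 1 (-1)"
definition ccn :: "nat \<Rightarrow> complex" where "ccn n = cis (- pi / 2^(Suc (Suc n)))"
definition aln :: "nat \<Rightarrow> real" where "aln n = - pi / 2^(Suc n)"

definition gsn :: "nat \<Rightarrow> complex mat list" where
  "gsn n = [single_gate (Suc n) (Suc n) Hm, single_gate (Suc n) (Suc n) Zm] @ fanc (Suc n) (Suc n) n @
     [single_gate (Suc n) 1 (diag2 (ccn n) (ccn n))] @ dch (Suc n) (aln n) (Suc n) @ qftc (Suc n) (Suc n) @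
     dch (Suc n) (aln n) (Suc n) @ fanc (Suc n) (Suc n) n @ [single_gate (Suc n) (Suc n) Zm, single_gate (Suc n) (Suc n) Hm]"

lemma Zs_cmono: "single_gate (Suc n) (Suc n) Zm = cmono (2^(Suc n)) (\<lambda>x. x) (\<lambda>x. if qbit (Suc n) x = 1 then -1 else 1)"
  unfolding Zm_def by (rule single_diag) simp

lemma Cs_cmono: "single_gate (Suc n) 1 (diag2 c c) = cmono (2^(Suc n)) (\<lambda>x. x) (\<lambda>x. c)"
  using single_diag[of 0 "Suc n" c c] by simp

lemma cp_app: "set xs \<subseteq> carrier_mat (2^m) (2^m) \<Longrightarrow> set ys \<subseteq> carrier_mat (2^m) (2^m) \<Longrightarrow>
   circuit_prod m (xs @ ys) = circuit_prod m xs * circuit_prod m ys"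
  by (rule circuit_prod_append) auto

lemma shape:
  fixes n defines "K \<equiv> Suc n"
  defines "Hs \<equiv> single_gate K K Hm" and "Zs \<equiv> single_gate K K Zm"
    and "P \<equiv> cmono (2^K) (fanp K n) (\<lambda>_. 1)" and "Cs \<equiv> cmono (2^K) (\<lambda>x. x) (\<lambda>x. ccn n)"
    and "D \<equiv> cmono (2^K) (\<lambda>x. x) (\<lambda>x. cis (aln n * real (x mod 2^K)))"
  shows "circuit_prod K (gsn n) = Hs * (Zs * (P * ((((Cs * (D * (EF K K * D))) * P) * Zs) * Hs)))"
proof -
  have cH: "Hs \<in> carrier_mat (2^K) (2^K)" unfolding Hs_def K_def by (rule single_gate_carrier) auto
  have cZ: "Zs \<in> carrier_mat (2^K) (2^K)" unfolding Zs_def K_def Zm_def by (rule single_gate_carrier) auto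
  have cC: "single_gate K 1 (diag2 (ccn n) (ccn n)) \<in> carrier_mat (2^K) (2^K)" unfolding K_def using single_gate_carrier[of 0 "Suc n" "diag2 (ccn n) (ccn n)"] by simp
  have c1: "set (fanc K K n) \<subseteq> carrier_mat (2^K) (2^K)" using fanc_carrier by blast
  have c2: "set (dch K (aln n) K) \<subseteq> carrier_mat (2^K) (2^K)" using dch_carrier by blast
  have c3: "set (qftc K K) \<subseteq> carrier_mat (2^K) (2^K)" using qftc_carrier by blast
  have pf: "circuit_prod K (fanc K K n) = P" unfolding P_def K_def by (rule fanc_prod) simp
  have pd: "circuit_prod K (dch K (aln n) K) = D" unfolding D_def by (rule dch_prod) simp
  have pq: "circuit_prod K (qftc K K) = EF K K" by (rule qft_prod) simp
  have pc: "single_gate K 1 (diag2 (ccn n) (ccn n)) = Cs" unfolding Cs_def K_def by (rule Cs_cmono)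
  have cP: "P \<in> carrier_mat (2^K) (2^K)" "Cs \<in> carrier_mat (2^K) (2^K)" "D \<in> carrier_mat (2^K) (2^K)"
    unfolding P_def Cs_def D_def by auto
  have "circuit_prod K (gsn n) = Hs * (Zs * (P * (Cs * (D * (EF K K * (D * (P * (Zs * (Hs * 1\<^sub>m (2^K))))))))))"
    unfolding gsn_def K_def[symmetric] Hs_def[symmetric] Zs_def[symmetric]
    using cH cZ cC c1 c2 c3
    by (simp add: cp_app circuit_prod_simps pf pd pq pc[simplified])
  also have "\<dots> = Hs * (Zs * (P * ((((Cs * (D * (EF K K * D))) * P) * Zs) * Hs)))"
  proof -
    have cF: "EF K K \<in> carrier_mat (2^K) (2^K)" by simp
    have cFD: "EF K K * D \<in> carrier_mat (2^K) (2^K)" by (rule mult_carrier_mat[OF cF cP(3)])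
    have cDFD: "D * (EF K K * D) \<in> carrier_mat (2^K) (2^K)" by (rule mult_carrier_mat[OF cP(3) cFD])
    have cX: "Cs * (D * (EF K K * D)) \<in> carrier_mat (2^K) (2^K)" by (rule mult_carrier_mat[OF cP(2) cDFD])
    have cZH: "Zs * Hs \<in> carrier_mat (2^K) (2^K)" by (rule mult_carrier_mat[OF cZ cH])
    have cPZH: "P * (Zs * Hs) \<in> carrier_mat (2^K) (2^K)" by (rule mult_carrier_mat[OF cP(1) cZH])
    have cXP: "Cs * (D * (EF K K * D)) * P \<in> carrier_mat (2^K) (2^K)" by (rule mult_carrier_mat[OF cX cP(1)])
    have "(((Cs * (D * (EF K K * D))) * P) * Zs) * Hs = ((Cs * (D * (EF K K * D))) * P) * (Zs * Hs)"
      using cXP cZ cH by (rule assoc_mult_mat)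
    also have "\<dots> = (Cs * (D * (EF K K * D))) * (P * (Zs * Hs))"
      using cX cP(1) cZH by (rule assoc_mult_mat)
    also have "\<dots> = Cs * ((D * (EF K K * D)) * (P * (Zs * Hs)))"
      using cP(2) cDFD cPZH by (rule assoc_mult_mat)
    also have "(D * (EF K K * D)) * (P * (Zs * Hs)) = D * ((EF K K * D) * (P * (Zs * Hs)))"
      using cP(3) cFD cPZH by (rule assoc_mult_mat)
    also have "(EF K K * D) * (P * (Zs * Hs)) = EF K K * (D * (P * (Zs * Hs)))"
      using cF cP(3) cPZH by (rule assoc_mult_mat)
    finally show ?thesis using cH by simp
  qed
  finally show ?thesis .
qed



definition Gc :: "nat \<Rightarrow> nat \<Rightarrow> nat \<Rightarrow> complex" where
  "Gc n x y = cis (- pi * real (2*x+1) * real (2*y+1) / (4 * 2^n)) / complex_of_real (sqrt (2 * 2^n))"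

lemma Gm_eq: "cmono (2^(Suc n)) (\<lambda>x. x) (\<lambda>x. ccn n) * (cmono (2^(Suc n)) (\<lambda>x. x) (\<lambda>x. cis (aln n * real (x mod 2^(Suc n))))
   * (EF (Suc n) (Suc n) * cmono (2^(Suc n)) (\<lambda>x. x) (\<lambda>x. cis (aln n * real (x mod 2^(Suc n))))))
   = mat (2^(Suc n)) (2^(Suc n)) (\<lambda>(x,y). Gc n x y)"
proof -
  have e: "ccn n * (cis (aln n * real x) * (fe (Suc n) x y * cis (aln n * real y))) = Gc n x y" for x y
  proof -
    have "ccn n * (cis (aln n * real x) * (fe (Suc n) x y * cis (aln n * real y))) =
      cis (- pi / 2^(Suc (Suc n))) * cis (- pi / 2^(Suc n) * real x) * fe (Suc n) x y * cis (- pi / 2^(Suc n) * real y)"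
      unfolding ccn_def aln_def by (simp add: mult.assoc)
    also have "\<dots> = Gc n x y" unfolding G_val Gc_def by simp
    finally show ?thesis .
  qed
  define d where "d = (\<lambda>x. cis (aln n * real (x mod 2^(Suc n))))"
  let ?D = "cmono (2^(Suc n)) (\<lambda>x. x) d"
  have cF: "EF (Suc n) (Suc n) \<in> carrier_mat (2^(Suc n)) (2^(Suc n))" by (rule EF_carrier)
  have cFD: "EF (Suc n) (Suc n) * ?D \<in> carrier_mat (2^(Suc n)) (2^(Suc n))" by (rule mult_carrier_mat[OF cF cmono_carrier])
  have cDFD: "?D * (EF (Suc n) (Suc n) * ?D) \<in> carrier_mat (2^(Suc n)) (2^(Suc n))" by (rule mult_carrier_mat[OF cmono_carrier cFD])
  show ?thesis unfolding d_def[symmetric]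
  proof (rule eq_matI)
    fix x y assume "x < dim_row (mat (2^(Suc n)) (2^(Suc n)) (\<lambda>(x,y). Gc n x y))" "y < dim_col (mat (2^(Suc n)) (2^(Suc n)) (\<lambda>(x,y). Gc n x y))"
    hence xy: "x < 2^(Suc n)" "y < 2^(Suc n)" by auto
    have "(cmono (2^(Suc n)) (\<lambda>x. x) (\<lambda>x. ccn n) * (?D * (EF (Suc n) (Suc n) * ?D))) $$ (x,y) =
       ccn n * (?D * (EF (Suc n) (Suc n) * ?D)) $$ (x,y)" by (rule diag_left[OF cDFD xy])
    also have "(?D * (EF (Suc n) (Suc n) * ?D)) $$ (x,y) = d x * (EF (Suc n) (Suc n) * ?D) $$ (x,y)" by (rule diag_left[OF cFD xy])
    also have "(EF (Suc n) (Suc n) * ?D) $$ (x,y) = EF (Suc n) (Suc n) $$ (x,y) * d y" using cmono_right[OF cF xy, of "\<lambda>x. x" d] xy by simp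
    also have "EF (Suc n) (Suc n) $$ (x,y) = fe (Suc n) x y" using xy unfolding EF_def by simp
    finally have f: "(cmono (2^(Suc n)) (\<lambda>x. x) (\<lambda>x. ccn n) * (?D * (EF (Suc n) (Suc n) * ?D))) $$ (x,y) =
       ccn n * (d x * (fe (Suc n) x y * d y))" .
    have "d x = cis (aln n * real x)" "d y = cis (aln n * real y)" unfolding d_def using xy by simp_all
    thus "(cmono (2^(Suc n)) (\<lambda>x. x) (\<lambda>x. ccn n) * (?D * (EF (Suc n) (Suc n) * ?D))) $$ (x,y) =
       mat (2^(Suc n)) (2^(Suc n)) (\<lambda>(x,y). Gc n x y) $$ (x,y)" unfolding f using e xy by simp
  qed (use cDFD in auto)
qed



lemma cmono_left_inv: assumes "B \<in> carrier_mat n c" "i < n" "j < c" "p i < n"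
   "\<And>k. k < n \<Longrightarrow> p (p k) = k" shows "(cmono n p d * B) $$ (i,j) = d (p i) * B $$ (p i, j)"
  by (rule cmono_left[where r=p and p=p, OF assms(1-4)]) (metis assms(2,5))

lemma R_entry:
  fixes n defines "K \<equiv> Suc n"
  defines "G \<equiv> mat (2^K) (2^K) (\<lambda>(x,y). Gc n x y)" and "P \<equiv> cmono (2^K) (fanp K n) (\<lambda>_. 1)"
   and "Zs \<equiv> cmono (2^K) (\<lambda>x. x) (\<lambda>x. if qbit K x = 1 then -1 else 1)"
  assumes i: "i < 2^K" and b: "b < 2^K"
  shows "(((G * P) * Zs) * single_gate K K Hm) $$ (i,b) =
    (Gc n i (fanp K n (bset n 0 b)) * 1 * (if qbit K (bset n 0 b) = 1 then -1 else 1)) * Hm $$ (0, qbit K b) +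
    (Gc n i (fanp K n (bset n 1 b)) * 1 * (if qbit K (bset n 1 b) = 1 then -1 else 1)) * Hm $$ (1, qbit K b)"
proof -
  have cG: "G \<in> carrier_mat (2^K) (2^K)" unfolding G_def by simp
  have cGP: "G * P \<in> carrier_mat (2^K) (2^K)" unfolding P_def by (rule mult_carrier_mat[OF cG cmono_carrier])
  have cGPZ: "G * P * Zs \<in> carrier_mat (2^K) (2^K)" unfolding Zs_def by (rule mult_carrier_mat[OF cGP cmono_carrier])
  have bl: "bset n c b < 2^K" if "c < 2" for c using bset_lt[OF that b] unfolding K_def by simp
  have fl: "fanp K n x < 2^K" if "x < 2^K" for x using fanp_lt[OF that] unfolding K_def by simp
  have e1: "((G * P) * Zs) $$ (i,l) = Gc n i (fanp K n l) * 1 * (if qbit K l = 1 then -1 else 1)" if "l < 2^K" for l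
  proof -
    have "((G * P) * Zs) $$ (i,l) = (G * P) $$ (i,l) * (if qbit K l = 1 then -1 else 1)"
      unfolding Zs_def using cmono_right[OF cGP i that, of "\<lambda>x. x"] that by simp
    also have "(G * P) $$ (i,l) = G $$ (i, fanp K n l) * 1"
      unfolding P_def using cmono_right[OF cG i that, of "fanp K n"] fl[OF that] by simp
    also have "G $$ (i, fanp K n l) = Gc n i (fanp K n l)" unfolding G_def using i fl[OF that] by simp
    finally show ?thesis .
  qed
  have "(((G * P) * Zs) * single_gate K K Hm) $$ (i,b) =
     ((G * P) * Zs) $$ (i, bset n 0 b) * Hm $$ (0, qbit K b) + ((G * P) * Zs) $$ (i, bset n 1 b) * Hm $$ (1, qbit K b)"
    unfolding K_def by (rule single_right) (use cGPZ i b in \<open>auto simp: K_def\<close>)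
  thus ?thesis using e1 bl by simp
qed

lemma M_entry:
  fixes n defines "K \<equiv> Suc n"
  defines "P \<equiv> cmono (2^K) (fanp K n) (\<lambda>_. 1)"
   and "Zs \<equiv> cmono (2^K) (\<lambda>x. x) (\<lambda>x. if qbit K x = 1 then -1 else (1::complex))"
  assumes R: "R \<in> carrier_mat (2^K) (2^K)" and a: "a < 2^K" and b: "b < 2^K"
  shows "(single_gate K K Hm * (Zs * (P * R))) $$ (a,b) =
    Hm $$ (qbit K a, 0) * ((if qbit K (bset n 0 a) = 1 then -1 else 1) * (1 * R $$ (fanp K n (bset n 0 a), b))) +
    Hm $$ (qbit K a, 1) * ((if qbit K (bset n 1 a) = 1 then -1 else 1) * (1 * R $$ (fanp K n (bset n 1 a), b)))"
proof -
  have cPR: "P * R \<in> carrier_mat (2^K) (2^K)" unfolding P_def by (rule mult_carrier_mat[OF cmono_carrier R])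
  have cZPR: "Zs * (P * R) \<in> carrier_mat (2^K) (2^K)" unfolding Zs_def by (rule mult_carrier_mat[OF cmono_carrier cPR])
  have bl: "bset n c a < 2^K" if "c < 2" for c using bset_lt[OF that a] unfolding K_def by simp
  have fl: "fanp K n x < 2^K" if "x < 2^K" for x using fanp_lt[OF that] unfolding K_def by simp
  have e1: "(Zs * (P * R)) $$ (i,b) = (if qbit K i = 1 then -1 else 1) * (1 * R $$ (fanp K n i, b))" if "i < 2^K" for i
  proof -
    have "(Zs * (P * R)) $$ (i,b) = (if qbit K i = 1 then -1 else 1) * (P * R) $$ (i,b)"
      unfolding Zs_def by (rule diag_left[OF cPR that b])
    also have "(P * R) $$ (i,b) = 1 * R $$ (fanp K n i, b)"
      unfolding P_def by (rule cmono_left_inv[where p="fanp K n", OF R that b fl[OF that]]) (simp add: K_def fanp_invol)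
    finally show ?thesis .
  qed
  have "(single_gate K K Hm * (Zs * (P * R))) $$ (a,b) =
     Hm $$ (qbit K a, 0) * (Zs * (P * R)) $$ (bset n 0 a, b) + Hm $$ (qbit K a, 1) * (Zs * (P * R)) $$ (bset n 1 a, b)"
    unfolding K_def by (rule single_left) (use cZPR a b in \<open>auto simp: K_def\<close>)
  thus ?thesis using e1 bl by simp
qed



lemma vals:
  assumes a: "a < 2^(Suc n)"
  shows "qbit (Suc n) a = a div 2^n" "bset n 0 a = a mod 2^n" "bset n 1 a = 2^n + a mod 2^n"
    "qbit (Suc n) (a mod 2^n) = 0" "qbit (Suc n) (2^n + a mod 2^n) = 1"
    "fanp (Suc n) n (a mod 2^n) = a mod 2^n" "fanp (Suc n) n (2^n + a mod 2^n) = 2*2^n - 1 - a mod 2^n"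
proof -
  have d: "a div 2^(Suc n) = 0" using a by simp
  have q: "a div 2^n < 2" using a by (simp add: div_less_iff_less_mult mult.commute)
  show "qbit (Suc n) a = a div 2^n" unfolding qbit_def using q by simp
  show "bset n 0 a = a mod 2^n" "bset n 1 a = 2^n + a mod 2^n" unfolding bset_def d by simp_all
  show "qbit (Suc n) (a mod 2^n) = 0" unfolding qbit_def by simp
  show "qbit (Suc n) (2^n + a mod 2^n) = 1" unfolding qbit_def by simp
  show "fanp (Suc n) n (a mod 2^n) = a mod 2^n" by (rule fanp_id) simp
  show "fanp (Suc n) n (2^n + a mod 2^n) = 2*2^n - 1 - a mod 2^n" using fanp_hi[of "a mod 2^n" n] by simp
qed

lemma Gvals:
  assumes "a < 2^n" "b < 2^n"
  shows "Gc n a b = cis (- (pi * real (2*a+1) * real (2*b+1) / (4 * 2^n))) / complex_of_real (sqrt (2 * 2^n))"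
    "Gc n a (2*2^n - 1 - b) = - cis (pi * real (2*a+1) * real (2*b+1) / (4 * 2^n)) / complex_of_real (sqrt (2 * 2^n))"
    "Gc n (2*2^n - 1 - a) b = - cis (pi * real (2*a+1) * real (2*b+1) / (4 * 2^n)) / complex_of_real (sqrt (2 * 2^n))"
    "Gc n (2*2^n - 1 - a) (2*2^n - 1 - b) = cis (- (pi * real (2*a+1) * real (2*b+1) / (4 * 2^n))) / complex_of_real (sqrt (2 * 2^n))"
proof -
  have a: "a < 2 * 2^n" and b: "b < 2*2^n" using assms by auto
  show "Gc n a b = cis (- (pi * real (2*a+1) * real (2*b+1) / (4 * 2^n))) / complex_of_real (sqrt (2 * 2^n))"
    unfolding Gc_def by simp
  show "Gc n (2*2^n - 1 - a) b = - cis (pi * real (2*a+1) * real (2*b+1) / (4 * 2^n)) / complex_of_real (sqrt (2 * 2^n))"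
    unfolding Gc_def using flip1[OF a, of b] by simp
  show "Gc n a (2*2^n - 1 - b) = - cis (pi * real (2*a+1) * real (2*b+1) / (4 * 2^n)) / complex_of_real (sqrt (2 * 2^n))"
    unfolding Gc_def using flip1[OF b, of a] by (simp add: ac_simps)
  show "Gc n (2*2^n - 1 - a) (2*2^n - 1 - b) = cis (- (pi * real (2*a+1) * real (2*b+1) / (4 * 2^n))) / complex_of_real (sqrt (2 * 2^n))"
    unfolding Gc_def using flip2[OF a b] by simp
qed



lemma DCT4_carrier: "DCT4 N \<in> carrier_mat N N" by (simp add: DCT4_def)
lemma DST4_carrier: "(- \<i>) \<cdot>\<^sub>m DST4 N \<in> carrier_mat N N" by (simp add: DST4_def)

lemma circ_eq: "circuit_prod (Suc n) (gsn n) = block_diag (DCT4 (2^n)) ((- \<i>) \<cdot>\<^sub>m DST4 (2^n))"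
proof -
  define K where "K = Suc n"
  define N where "N = (2::nat)^n"
  define G where "G = mat (2^K) (2^K) (\<lambda>(x,y). Gc n x y)"
  define P where "P = cmono (2^K) (fanp K n) (\<lambda>_. 1)"
  define Zs where "Zs = cmono (2^K) (\<lambda>x. x) (\<lambda>x. if qbit K x = 1 then -1 else (1::complex))"
  define Hs where "Hs = single_gate K K Hm"
  define R where "R = ((G * P) * Zs) * Hs"
  have KN: "(2::nat)^K = 2 * N" unfolding K_def N_def by simp
  have cR: "R \<in> carrier_mat (2^K) (2^K)" unfolding R_def G_def P_def Zs_def Hs_def
    by (rule mult_carrier_mat[OF mult_carrier_mat[OF mult_carrier_mat]]) (use single_gate_carrier[of n "Suc n" Hm] in \<open>auto simp: K_def\<close>)
  have "circuit_prod (Suc n) (gsn n) = Hs * (Zs * (P * R))"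
    unfolding shape R_def G_def Hs_def Zs_def P_def K_def Gm_eq[symmetric] Zs_cmono[symmetric] ..
  also have "\<dots> = block_diag (DCT4 N) ((- \<i>) \<cdot>\<^sub>m DST4 N)"
  proof (rule eq_matI)
    fix a b assume "a < dim_row (block_diag (DCT4 N) ((- \<i>) \<cdot>\<^sub>m DST4 N))" "b < dim_col (block_diag (DCT4 N) ((- \<i>) \<cdot>\<^sub>m DST4 N))"
    hence ab: "a < 2^K" "b < 2^K" unfolding block_diag_def KN using DCT4_carrier[of N] DST4_carrier[of N] by auto
    have m: "(Hs * (Zs * (P * R))) $$ (a,b) =
      Hm $$ (qbit K a, 0) * ((if qbit K (bset n 0 a) = 1 then -1 else 1) * (1 * R $$ (fanp K n (bset n 0 a), b))) +
      Hm $$ (qbit K a, 1) * ((if qbit K (bset n 1 a) = 1 then -1 else 1) * (1 * R $$ (fanp K n (bset n 1 a), b)))"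
      unfolding Hs_def Zs_def P_def K_def by (rule M_entry) (use cR ab in \<open>simp_all add: K_def\<close>)
    have r: "R $$ (i,b) = (Gc n i (fanp K n (bset n 0 b)) * 1 * (if qbit K (bset n 0 b) = 1 then -1 else 1)) * Hm $$ (0, qbit K b) +
      (Gc n i (fanp K n (bset n 1 b)) * 1 * (if qbit K (bset n 1 b) = 1 then -1 else 1)) * Hm $$ (1, qbit K b)" if "i < 2^K" for i
      unfolding R_def G_def P_def Zs_def Hs_def K_def by (rule R_entry) (use that ab in \<open>simp_all add: K_def\<close>)
    have va: "qbit K a = a div N" "bset n 0 a = a mod N" "bset n 1 a = N + a mod N"
      "qbit K (a mod N) = 0" "qbit K (N + a mod N) = 1"
      "fanp K n (a mod N) = a mod N" "fanp K n (N + a mod N) = 2*N - 1 - a mod N"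
      using vals[of a n] ab unfolding K_def N_def by auto
    have vb: "qbit K b = b div N" "bset n 0 b = b mod N" "bset n 1 b = N + b mod N"
      "qbit K (b mod N) = 0" "qbit K (N + b mod N) = 1"
      "fanp K n (b mod N) = b mod N" "fanp K n (N + b mod N) = 2*N - 1 - b mod N"
      using vals[of b n] ab unfolding K_def N_def by auto
    have "a mod N < N" by (simp add: N_def)
    hence l1: "a mod N < 2^K" "2*N - 1 - a mod N < 2^K" unfolding KN by auto
    have gv: "Gc n (a mod N) (b mod N) = cis (- (pi * real (2*(a mod N)+1) * real (2*(b mod N)+1) / (4 * N))) / complex_of_real (sqrt (2 * N))"
    "Gc n (a mod N) (2*N - 1 - b mod N) = - cis (pi * real (2*(a mod N)+1) * real (2*(b mod N)+1) / (4 * N)) / complex_of_real (sqrt (2 * N))"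
    "Gc n (2*N - 1 - a mod N) (b mod N) = - cis (pi * real (2*(a mod N)+1) * real (2*(b mod N)+1) / (4 * N)) / complex_of_real (sqrt (2 * N))"
    "Gc n (2*N - 1 - a mod N) (2*N - 1 - b mod N) = cis (- (pi * real (2*(a mod N)+1) * real (2*(b mod N)+1) / (4 * N))) / complex_of_real (sqrt (2 * N))"
      using Gvals[of "a mod N" n "b mod N"] unfolding N_def by auto
    have qa: "a div N < 2" "b div N < 2" using ab unfolding KN by (auto simp: N_def div_less_iff_less_mult mult.commute)
    have e: "(Hs * (Zs * (P * R))) $$ (a,b) = Hm $$ (a div N, 0) * (1 * (1 * (
        (Gc n (a mod N) (b mod N) * 1 * 1) * Hm $$ (0, b div N) + (Gc n (a mod N) (2*N - 1 - b mod N) * 1 * -1) * Hm $$ (1, b div N)))) +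
      Hm $$ (a div N, 1) * (-1 * (1 * (
        (Gc n (2*N - 1 - a mod N) (b mod N) * 1 * 1) * Hm $$ (0, b div N) + (Gc n (2*N - 1 - a mod N) (2*N - 1 - b mod N) * 1 * -1) * Hm $$ (1, b div N))))"
      unfolding m r[OF l1(1)] r[OF l1(2)] va vb by simp
    show "(Hs * (Zs * (P * R))) $$ (a,b) = block_diag (DCT4 N) ((- \<i>) \<cdot>\<^sub>m DST4 N) $$ (a,b)"
    proof -
      have hm: "Hm $$ (0,0) = hh" "Hm $$ (0,1) = hh" "Hm $$ (1,0) = hh" "Hm $$ (1,1) = -hh" by (simp_all add: Hm_def)
      have h2: "hh * hh = 1/2"
      proof -
        have r0: "complex_of_real (sqrt 2) * complex_of_real (sqrt 2) = complex_of_real (sqrt 2 * sqrt 2)"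
          by (rule of_real_mult[symmetric])
        have r: "complex_of_real (sqrt 2) * complex_of_real (sqrt 2) = 2" unfolding r0 by simp
        have "hh * hh = 1 / (complex_of_real (sqrt 2) * complex_of_real (sqrt 2))" unfolding hh_def by simp
        thus ?thesis unfolding r by simp
      qed
      have cp: "cis (-t) + cis t = 2 * complex_of_real (cos t)" "cis (-t) - cis t = - 2 * \<i> * complex_of_real (sin t)" for t
        by (simp_all add: complex_eq_iff)
      have Np: "N > 0" unfolding N_def by simp
      define A where "A = a mod N"
      define B where "B = b mod N"
      define t where "t = pi * real (2*A+1) * real (2*B+1) / (4 * N)"
      define s where "s = complex_of_real (sqrt (2 * N))"
      have t': "(real A + 1/2) * (real B + 1/2) * pi / real N = t" unfolding t_def using Np by (simp add: field_simps)
      have sq: "complex_of_real (sqrt (2 / real N)) = 2 / s"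
      proof -
        have "sqrt (2 / real N) * sqrt (2 * real N) = sqrt (2 / real N * (2 * real N))" by (rule real_sqrt_mult[symmetric])
        also have "2 / real N * (2 * real N) = 4" using Np by simp
        finally have r: "sqrt (2 / real N) * sqrt (2 * real N) = 2" by simp
        have m2: "complex_of_real (sqrt (2 / real N)) * complex_of_real (sqrt (2 * real N)) = complex_of_real (sqrt (2 / real N) * sqrt (2 * real N))"
          by (rule of_real_mult[symmetric])
        have ss: "s = complex_of_real (sqrt (2 * real N))" unfolding s_def by simp
        have "complex_of_real (sqrt (2 / real N)) * s = 2" unfolding ss m2 r by simp
        moreover have "s \<noteq> 0" unfolding s_def using Np by simp
        ultimately show ?thesis by (simp add: field_simps)
      qed
      have s0: "s \<noteq> 0" unfolding s_def using Np by simp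
      have L: "(Hs * (Zs * (P * R))) $$ (a,b) = (Hm $$ (a div N, 0) * (cis (-t) * Hm $$ (0, b div N) + cis t * Hm $$ (1, b div N))
          + Hm $$ (a div N, 1) * (cis t * Hm $$ (0, b div N) + cis (-t) * Hm $$ (1, b div N))) / s"
        unfolding e gv unfolding A_def[symmetric] B_def[symmetric] t_def[symmetric] s_def[symmetric] using s0 by (simp add: field_simps)
      have dims: "dim_row (DCT4 N) = N" "dim_col (DCT4 N) = N" "dim_row ((- \<i>) \<cdot>\<^sub>m DST4 N) = N" "dim_col ((- \<i>) \<cdot>\<^sub>m DST4 N) = N"
        using DCT4_carrier[of N] DST4_carrier[of N] by auto
      have abN: "a < N + N" "b < N + N" using ab KN by auto
      have blk: "block_diag (DCT4 N) ((- \<i>) \<cdot>\<^sub>m DST4 N) $$ (a,b) = (if a < N then if b < N then DCT4 N $$ (a,b) else 0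
          else if b < N then 0 else ((- \<i>) \<cdot>\<^sub>m DST4 N) $$ (a - N, b - N))"
        unfolding block_diag_def using abN dims by simp
      consider (c00) "a < N" "b < N" | (c01) "a < N" "\<not> b < N" | (c10) "\<not> a < N" "b < N" | (c11) "\<not> a < N" "\<not> b < N" by blast
      then show ?thesis
      proof cases
        case c00
        hence q: "a div N = 0" "b div N = 0" "A = a" "B = b" unfolding A_def B_def by simp_all
        have "DCT4 N $$ (a,b) = complex_of_real (sqrt (2 / real N)) * complex_of_real (cos t)"
          unfolding DCT4_def using c00 t' q by simp
        hence bv: "block_diag (DCT4 N) ((- \<i>) \<cdot>\<^sub>m DST4 N) $$ (a,b) = 2 / s * complex_of_real (cos t)"
          unfolding blk sq using c00 by simp
        have "hh * (cis (-t) * hh + cis t * hh) + hh * (cis t * hh + cis (-t) * hh) = 2 * (hh * hh) * (cis (-t) + cis t)"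
          by (simp add: algebra_simps)
        thus ?thesis unfolding L bv q hm h2 cp by simp
      next
        case c01
        hence q: "a div N = 0" "b div N = 1" using abN Np by (auto simp: le_div_geq)
        have bv: "block_diag (DCT4 N) ((- \<i>) \<cdot>\<^sub>m DST4 N) $$ (a,b) = 0"
          unfolding blk using c01 by simp
        have "hh * (cis (-t) * hh + cis t * -hh) + hh * (cis t * hh + cis (-t) * -hh) = 0"
          by (simp add: algebra_simps)
        thus ?thesis unfolding L bv q hm by simp
      next
        case c10
        hence q: "a div N = 1" "b div N = 0" using abN Np by (auto simp: le_div_geq)
        have bv: "block_diag (DCT4 N) ((- \<i>) \<cdot>\<^sub>m DST4 N) $$ (a,b) = 0"
          unfolding blk using c10 by simp
        have "hh * (cis (-t) * hh + cis t * hh) + -hh * (cis t * hh + cis (-t) * hh) = 0"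
          by (simp add: algebra_simps)
        thus ?thesis unfolding L bv q hm by simp
      next
        case c11
        hence q: "a div N = 1" "b div N = 1" "A = a - N" "B = b - N" unfolding A_def B_def using abN
          by (auto simp: le_mod_geq le_div_geq Np)
        have "((- \<i>) \<cdot>\<^sub>m DST4 N) $$ (a - N, b - N) = - \<i> * (complex_of_real (sqrt (2 / real N)) * complex_of_real (sin t))"
          unfolding DST4_def using c11 abN t' q by simp
        hence bv: "block_diag (DCT4 N) ((- \<i>) \<cdot>\<^sub>m DST4 N) $$ (a,b) = - \<i> * (2 / s * complex_of_real (sin t))"
          unfolding blk sq using c11 by simp
        have "hh * (cis (-t) * hh + cis t * -hh) + -hh * (cis t * hh + cis (-t) * -hh) = 2 * (hh * hh) * (cis (-t) - cis t)"
          by (simp add: algebra_simps)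
        thus ?thesis unfolding L bv q hm h2 cp by simp
      qed
    qed
  next
    have "Hs \<in> carrier_mat (2^K) (2^K)" unfolding Hs_def K_def by (rule single_gate_carrier) auto
    thus "dim_row (Hs * (Zs * (P * R))) = dim_row (block_diag (DCT4 N) ((- \<i>) \<cdot>\<^sub>m DST4 N))"
      using DCT4_carrier[of N] DST4_carrier[of N] unfolding KN by (auto simp: block_diag_def)
    show "dim_col (Hs * (Zs * (P * R))) = dim_col (block_diag (DCT4 N) ((- \<i>) \<cdot>\<^sub>m DST4 N))"
      using DCT4_carrier[of N] DST4_carrier[of N] cR unfolding KN by (auto simp: block_diag_def)
  qed
  finally show ?thesis unfolding N_def .
qed



lemma unitary2_diag: "cnj a * a = 1 \<Longrightarrow> cnj b * b = 1 \<Longrightarrow> unitary2 (diag2 a b)"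
  unfolding unitary2_def
  by (auto simp: ctrans_def diag2_def scalar_prod_def numeral_2_eq_2 less_Suc_eq mult.commute intro!: eq_matI)

lemma cnj_cis: "cnj (cis x) * cis x = 1"
  by (simp add: cis_cnj cis_mult)

lemma unitary2_Hm: "unitary2 Hm"
proof -
  have h2: "hh * hh = 1/2"
  proof -
    have r0: "complex_of_real (sqrt 2) * complex_of_real (sqrt 2) = complex_of_real (sqrt 2 * sqrt 2)"
      by (rule of_real_mult[symmetric])
    have r: "complex_of_real (sqrt 2) * complex_of_real (sqrt 2) = 2" unfolding r0 by simp
    have "hh * hh = 1 / (complex_of_real (sqrt 2) * complex_of_real (sqrt 2))" unfolding hh_def by simp
    thus ?thesis unfolding r by simp
  qed
  have c: "cnj hh = hh" unfolding hh_def by simp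
  show ?thesis unfolding unitary2_def
    using h2 c by (auto simp: mult.commute[of 2] ctrans_def Hm_def scalar_prod_def numeral_2_eq_2 less_Suc_eq intro!: eq_matI)
qed

lemma eg_single: "1 \<le> t \<Longrightarrow> t \<le> m \<Longrightarrow> unitary2 U \<Longrightarrow> elementary_gate m (single_gate m t U)"
  unfolding elementary_gate_def by blast

lemma eg_cnot: "1 \<le> c \<Longrightarrow> c \<le> m \<Longrightarrow> 1 \<le> t \<Longrightarrow> t \<le> m \<Longrightarrow> c \<noteq> t \<Longrightarrow> elementary_gate m (cnot_gate m c t)"
  unfolding elementary_gate_def by blast

lemma eg_pg: "1 \<le> t \<Longrightarrow> t \<le> K \<Longrightarrow> elementary_gate K (pg K t \<alpha>)"
  unfolding pg_def by (rule eg_single) (auto intro: unitary2_diag cnj_cis)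

lemma eg_cpg: "1 \<le> c \<Longrightarrow> c \<le> K \<Longrightarrow> 1 \<le> t \<Longrightarrow> t \<le> K \<Longrightarrow> c \<noteq> t \<Longrightarrow> \<forall>G\<in>set (cpg K c t \<phi>). elementary_gate K G"
  unfolding cpg_def by (auto intro: eg_pg eg_cnot)

lemma eg_cpc: "Suc c \<le> K \<Longrightarrow> k \<le> c \<Longrightarrow> \<forall>G\<in>set (cpc K (Suc c) \<phi> k). elementary_gate K G"
proof (induction k)
  case (Suc k)
  have "\<forall>G\<in>set (cpg K (Suc c) (Suc k) (\<phi> * 2^k)). elementary_gate K G"
    using Suc.prems by (intro eg_cpg) auto
  thus ?case using Suc by auto
qed simp

lemma eg_rotc: "s \<le> K \<Longrightarrow> \<forall>G\<in>set (rotc K s). elementary_gate K G"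
  by (induction K s rule: rotc.induct) (auto simp: swapc_def intro: eg_cnot)

lemma eg_qftc: "m \<le> K \<Longrightarrow> \<forall>G\<in>set (qftc K m). elementary_gate K G"
proof (induction m)
  case (Suc m)
  have "elementary_gate K (single_gate K (Suc m) Hm)" using Suc.prems by (intro eg_single unitary2_Hm) auto
  thus ?case using Suc eg_cpc[of m K m] eg_rotc[of "Suc m" K] by auto
qed simp

lemma eg_dch: "k \<le> K \<Longrightarrow> \<forall>G\<in>set (dch K \<alpha> k). elementary_gate K G"
  by (induction k) (auto intro: eg_pg)

lemma eg_fanc: "k < c \<Longrightarrow> c \<le> K \<Longrightarrow> \<forall>G\<in>set (fanc K c k). elementary_gate K G"
  by (induction k) (auto intro: eg_cnot)

lemma len_cpc: "length (cpc K c \<phi> k) = 5 * k" by (induction k) (auto simp: cpg_def)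
lemma len_rotc: "length (rotc K (Suc k)) = 3 * k" by (induction k) (auto simp: swapc_def)
lemma len_qftc: "length (qftc K m) \<le> 4 * m^2" 
proof (induction m)
  case (Suc m)
  have "length (qftc K (Suc m)) = 1 + 5 * m + length (qftc K m) + 3 * m" by (simp add: len_cpc len_rotc)
  also have "\<dots> \<le> 4 * (Suc m)^2" using Suc by (simp add: power2_eq_square)
  finally show ?case .
qed simp
lemma len_dch: "length (dch K \<alpha> k) = k" by (induction k) auto
lemma len_fanc: "length (fanc K c k) = k" by (induction k) auto

lemma len_gsn: "length (gsn n) \<le> 4 * (Suc n)^2 + 4 * n + 7"
  unfolding gsn_def using len_qftc[of "Suc n" "Suc n"] by (simp add: len_dch len_fanc)

lemma eg_gsn: "\<forall>G\<in>set (gsn n). elementary_gate (Suc n) G"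
proof -
  have u: "unitary2 Zm" unfolding Zm_def by (rule unitary2_diag) auto
  have uc: "unitary2 (diag2 (ccn n) (ccn n))" unfolding ccn_def by (rule unitary2_diag) (rule cnj_cis)+
  have "elementary_gate (Suc n) (single_gate (Suc n) (Suc n) Hm)" by (rule eg_single) (auto intro: unitary2_Hm)
  moreover have "elementary_gate (Suc n) (single_gate (Suc n) (Suc n) Zm)" by (rule eg_single) (auto intro: u)
  moreover have "elementary_gate (Suc n) (single_gate (Suc n) 1 (diag2 (ccn n) (ccn n)))" by (rule eg_single) (auto intro: uc)
  ultimately show ?thesis unfolding gsn_def
    using eg_fanc[of n "Suc n" "Suc n"] eg_dch[of "Suc n" "Suc n" "aln n"] eg_qftc[of "Suc n" "Suc n"] by auto
qed

lemma kron_ket0: "kron X (ket0 0) = X"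
  unfolding kron_def ket0_def by (rule eq_matI) auto

theorem mainTheorem2:
  shows "\<exists>c::real. c > 0 \<and> (\<exists>A::nat. \<forall>n::nat. n \<ge> 1 \<longrightarrow>
           (\<exists>a gs. a \<le> A \<and> real (length gs) \<le> c * real n ^ 2 \<and>
              realizes (n + 1) a gs
                (block_diag (DCT4 (2 ^ n)) ((- \<i>) \<cdot>\<^sub>m DST4 (2 ^ n)))))"
proof -
  have main: "\<exists>a gs. a \<le> 0 \<and> real (length gs) \<le> 30 * real n ^ 2 \<and>
              realizes (n + 1) a gs (block_diag (DCT4 (2 ^ n)) ((- \<i>) \<cdot>\<^sub>m DST4 (2 ^ n)))" if n: "n \<ge> 1" for n
  proof -
  have l: "real (length (gsn n)) \<le> 30 * real n ^ 2"
  proof -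
    have a: "n \<le> n*n" "1 \<le> n*n" using n by simp_all
    have "(4::nat) * (Suc n)^2 + 4 * n + 7 = 4 * (n*n) + 12 * n + 11" by (simp add: power2_eq_square algebra_simps)
    also have "\<dots> \<le> 30 * (n*n)" using a by linarith
    finally have "length (gsn n) \<le> 30 * (n*n)" using len_gsn[of n] by linarith
    hence "real (length (gsn n)) \<le> real (30 * (n*n))" by (simp only: of_nat_le_iff)
    thus ?thesis by (simp add: power2_eq_square)
  qed
  have c: "block_diag (DCT4 (2 ^ n)) ((- \<i>) \<cdot>\<^sub>m DST4 (2 ^ n)) \<in> carrier_mat (2^(Suc n)) (2^(Suc n))"
  proof -
    have "block_diag (DCT4 (2 ^ n)) ((- \<i>) \<cdot>\<^sub>m DST4 (2 ^ n)) \<in> carrier_mat (2^n + 2^n) (2^n + 2^n)"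
      unfolding block_diag_def by (rule four_block_carrier_mat[OF DCT4_carrier DST4_carrier])
    thus ?thesis by (simp add: mult_2)
  qed
  have r: "realizes (n + 1) 0 (gsn n) (block_diag (DCT4 (2 ^ n)) ((- \<i>) \<cdot>\<^sub>m DST4 (2 ^ n)))"
    unfolding realizes_def kron_ket0 using eg_gsn[of n] circ_eq[of n] right_mult_one_mat[OF c] by simp
  show ?thesis using l r by blast
  qed
  show ?thesis
    apply (rule exI[of _ "30::real"])
    apply (rule conjI, simp)
    apply (rule exI[of _ "0::nat"])
    using main by blast
qed


end
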